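(* Let $\alpha\in(0,1)$, $H\in(0,\tfrac12)$, $T>0$, and let $\rho$ be a real number with $-\frac{\alpha}{4}-\frac{H\alpha}{2}<\rho<\frac{\alpha+1}{4}-\frac{H\alpha}{2}$ such that $\sum_{i=1}^\infty \|A^{\rho}Q^{1/2}\phi_i\|^2=\sum_{i=1}^\infty\lambda_i^{2\rho}q_i<\infty$. Set $\kappa=\frac{\alpha}{2}+H\alpha+2\rho$ and assume $\kappa>0$. Then there is a constant $C$ independent of $s,t$ such that for all $0\le s\le t\le T$, $$\mathrm{E}\Big[\Big\|\int_s^t A^{\frac{\kappa-\alpha}{2}}\mathscr{S}(t-r)\,\mathrm{d}B^Q_H(r)\Big\|^2\Big]+\mathrm{E}\Big[\Big\|\int_s^t A^{\frac{\kappa-\alpha}{2}}\mathscr{C}(t-r)\,\mathrm{d}B^Q_H(r)\Big\|^2\Big]\le C,$$ and moreover $$\mathrm{E}\Big[\Big\|A^{-\frac{\alpha}{2}}\int_s^t \mathscr{S}(t-r)\,\mathrm{d}B^Q_H(r)\Big\|^2\Big]\le C\,(t-s)^{\min\{\frac{2\kappa}{\alpha},2\}}.$$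
   Context: $D\subseteq\mathbb{R}^d$ ($d\in\{1,2,3\}$) is a bounded Lipschitz domain, $\|\cdot\|$ and $\langle\cdot,\cdot\rangle$ are the norm and inner product of $L^2(D)$. $A=-\Delta$ with homogeneous Dirichlet boundary conditions on $D$, with orthonormal eigenpairs $(\lambda_i,\phi_i)_{i\ge1}$; for $\nu\in\mathbb{R}$, $A^{\nu/2}u=\sum_i\lambda_i^{\nu/2}\langle u,\phi_i\rangle\phi_i$. $\mathscr{C}(t)=\cos(A^{\alpha/2}t)$ and $\mathscr{S}(t)=\sin(A^{\alpha/2}t)$ are defined spectrally: $\mathscr{C}(t)u=\sum_i\cos(\lambda_i^{\alpha/2}t)\langle u,\phi_i\rangle\phi_i$, similarly for $\sin$. $Q$ is a self-adjoint nonnegative operator on $L^2(D)$ with $Q\phi_i=q_i\phi_i$, $q_i\ge0$. The noise is $B^Q_H(t)=\sum_{i\ge1}\sqrt{q_i}\,\xi^i_H(t)\phi_i$, where $\xi^i_H$ are mutually independent real fractional Brownian motions with Hurst parameter $H$, i.e. centered Gaussian with $\mathrm{E}[\xi^i_H(t)\xi^i_H(s)]=\frac12(t^{2H}+s^{2H}-|t-s|^{2H})$. For a (operator-valued, smooth) integrand $g$, $\int_s^t g(r)\,\mathrm{d}\xi_H(r)$ is the limit of Riemann sums $\sum_j g(t_j)(\xi_H(t_{j+1})-\xi_H(t_j))$ over partitions $s=t_0<\dots<t_n=t$ with mesh going to $0$, which equals $g(t)\xi_H(t)-g(s)\xi_H(s)-\int_s^t g'(r)\xi_H(r)\,\mathrm{d}r$;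 integrals against $B^Q_H$ are defined componentwise in the basis $(\phi_i)$. *)

theory Defs
  imports "HOL-Probability.Probability"
begin

definition fbm_cov :: "real \<Rightarrow> real \<Rightarrow> real \<Rightarrow> real" where
  "fbm_cov H t s = (t powr (2*H) + s powr (2*H) - \<bar>t - s\<bar> powr (2*H)) / 2"

text \<open>A centered Gaussian family X indexed by I with covariance K: every finite
  linear combination is a centered normal variable whose variance is given by K
  (stated through its characteristic function, which also covers degenerate cases).\<close>
definition centered_gaussian_family ::
  "'w measure \<Rightarrow> ('i \<Rightarrow> 'w \<Rightarrow> real) \<Rightarrow> 'i set \<Rightarrow> ('i \<Rightarrow> 'i \<Rightarrow> real) \<Rightarrow> bool" where
  "centered_gaussian_family M X I K \<longleftrightarrow>
     (\<forall>i\<in>I. X i \<in> borel_measurable M) \<and>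
     (\<forall>F c u. finite F \<longrightarrow> F \<subseteq> I \<longrightarrow>
        char (distr M borel (\<lambda>\<omega>. \<Sum>i\<in>F. c i * X i \<omega>)) u =
        complex_of_real (exp (- (u^2 * (\<Sum>i\<in>F. \<Sum>j\<in>F. c i * c j * K i j)) / 2)))"

definition is_fbm :: "'w measure \<Rightarrow> real \<Rightarrow> (real \<Rightarrow> 'w \<Rightarrow> real) \<Rightarrow> bool" where
  "is_fbm M H X \<longleftrightarrow> centered_gaussian_family M X {0..} (fbm_cov H) \<and>
     (\<forall>\<omega>\<in>space M. continuous_on {0..} (\<lambda>t. X t \<omega>))"

text \<open>Pathwise integral of a smooth deterministic scalar integrand g against a path X,
  via the integration-by-parts formula (limit of Riemann sums).\<close>
definition path_int :: "(real \<Rightarrow> real) \<Rightarrow> (real \<Rightarrow> 'w \<Rightarrow> real) \<Rightarrow> real \<Rightarrow> real \<Rightarrow> 'w \<Rightarrow> real" where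
  "path_int g X s t \<omega> = g t * X t \<omega> - g s * X s \<omega> - integral {s..t} (\<lambda>r. deriv g r * X r \<omega>)"

text \<open>E\<parallel>\<integral>_s^t G(r) dB^Q_H(r)\<parallel>^2 for an operator G diagonal in the eigenbasis
  (G(r) \<phi>_i = g i r \<phi>_i), with B^Q_H = \<Sum> sqrt(q_i) \<xi>_i \<phi>_i; by orthonormality of
  (\<phi>_i) the squared L^2 norm is \<Sum>_i q_i (\<integral> g_i d\<xi>_i)^2.\<close>
definition E_norm2 ::
  "'w measure \<Rightarrow> (nat \<Rightarrow> real) \<Rightarrow> (nat \<Rightarrow> real \<Rightarrow> 'w \<Rightarrow> real) \<Rightarrow> (nat \<Rightarrow> real \<Rightarrow> real)
   \<Rightarrow> real \<Rightarrow> real \<Rightarrow> ennreal" where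
  "E_norm2 M q \<xi> g s t =
     (\<integral>\<^sup>+ \<omega>. (\<Sum>i. ennreal (q i * (path_int (g i) (\<xi> i) s t \<omega>)^2)) \<partial>M)"

end

theory Submission
  imports Defs
begin


lemma gauss_sq_bound:
  fixes Z :: "'w \<Rightarrow> real"
  assumes P: "prob_space M" and Zm: "Z \<in> borel_measurable M"
    and ch: "\<And>u. char (distr M borel Z) u = complex_of_real (exp (- (u^2 * V) / 2))"
  shows "0 \<le> V" "(\<integral>\<^sup>+ \<omega>. ennreal ((Z \<omega>)^2) \<partial>M) \<le> ennreal V"
proof -
  interpret prob_space M by fact
  interpret D: real_distribution "distr M borel Z" using Zm by simp
  have "norm (char (distr M borel Z) 1) \<le> 1" by (rule D.cmod_char_le_1)
  then have "exp (- V / 2) \<le> 1" using ch[of 1] by simp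
  then show V: "0 \<le> V" by simp
  define u :: "nat \<Rightarrow> real" where "u n = 1 / (real n + 1)" for n
  have upos: "u n > 0" for n by (simp add: u_def)
  define f where "f n \<omega> = ennreal (2 * (1 - cos (u n * Z \<omega>)) / (u n)^2)" for n \<omega>
  have fm: "f n \<in> borel_measurable M" for n unfolding f_def using Zm by measurable
  have re: "(\<integral> \<omega>. cos (u n * Z \<omega>) \<partial>M) = exp (- ((u n)^2 * V) / 2)" for n
  proof -
    have "char (distr M borel Z) (u n) = (CLINT \<omega>|M. iexp (u n * Z \<omega>))"
      unfolding char_def using Zm by (subst integral_distr) auto
    moreover have ii: "integrable M (\<lambda>\<omega>. iexp (u n * Z \<omega>))"
      by (intro integrable_const_bound[where B=1]) (use Zm in auto)
    ultimately have "Re (char (distr M borel Z) (u n)) = (\<integral> \<omega>. Re (iexp (u n * Z \<omega>)) \<partial>M)"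
      using integral_Re[OF ii] by simp
    also have "\<dots> = (\<integral> \<omega>. cos (u n * Z \<omega>) \<partial>M)"
      by (simp add: Re_exp)
    finally show ?thesis using ch[of "u n"] by simp
  qed
  have intf: "integral\<^sup>N M (f n) \<le> ennreal V" for n
  proof -
    have int: "integrable M (\<lambda>\<omega>. 2 * (1 - cos (u n * Z \<omega>)) / (u n)^2)"
      proof (rule integrable_const_bound[where B="4 / (u n)^2"])
      show "AE \<omega> in M. norm (2 * (1 - cos (u n * Z \<omega>)) / (u n)^2) \<le> 4 / (u n)^2"
        using upos[of n] by (auto intro!: AE_I2 divide_right_mono simp: abs_le_iff) (smt (verit) cos_ge_minus_one)
    qed (use Zm in auto)
    have eqn: "integral\<^sup>N M (f n) = ennreal (\<integral> \<omega>. 2 * (1 - cos (u n * Z \<omega>)) / (u n)^2 \<partial>M)"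
      unfolding f_def by (rule nn_integral_eq_integral[OF int]) auto
    have "(\<integral> \<omega>. 2 * (1 - cos (u n * Z \<omega>)) / (u n)^2 \<partial>M)
        = 2 * (1 - exp (- ((u n)^2 * V) / 2)) / (u n)^2"
    proof -
      have ic: "integrable M (\<lambda>\<omega>. cos (u n * Z \<omega>))"
        by (rule integrable_const_bound[where B=1]) (use Zm in auto)
      have "(\<integral> \<omega>. 2 * (1 - cos (u n * Z \<omega>)) / (u n)^2 \<partial>M)
         = (\<integral> \<omega>. (2 / (u n)^2) - (2 / (u n)^2) * cos (u n * Z \<omega>) \<partial>M)"
        by (rule Bochner_Integration.integral_cong) (auto simp: diff_divide_distrib right_diff_distrib)
      also have "\<dots> = 2 / (u n)^2 - (2 / (u n)^2) * (\<integral> \<omega>. cos (u n * Z \<omega>) \<partial>M)"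
        using ic by (simp add: Bochner_Integration.integral_diff prob_space)
      also have "\<dots> = 2 * (1 - exp (- ((u n)^2 * V) / 2)) / (u n)^2"
        unfolding re[of n] by (simp add: right_diff_distrib diff_divide_distrib)
      finally show ?thesis .
    qed
    also have "\<dots> \<le> V"
    proof -
      have "1 - exp (- ((u n)^2 * V) / 2) \<le> (u n)^2 * V / 2"
        using exp_ge_add_one_self[of "- ((u n)^2 * V) / 2"] by simp
      then show ?thesis using upos[of n] by (simp add: field_simps)
    qed
    finally show ?thesis unfolding eqn by (rule ennreal_leI)
  qed
  have lim: "(\<lambda>n. 2 * (1 - cos (u n * z)) / (u n)^2) \<longlonglongrightarrow> z^2" for z
  proof (cases "z = 0")
    case True then show ?thesis by simp
  next
    case False
    have eq: "2 * (1 - cos (u n * z)) / (u n)^2 = z^2 * (sin (u n * z / 2) / (u n * z / 2))^2" for n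
    proof -
      have "cos (u n * z) = 1 - 2 * (sin (u n * z / 2))^2"
        using cos_double_sin[of "u n * z / 2"] by simp
      then show ?thesis using upos[of n] False by (simp add: field_simps power2_eq_square)
    qed
    have u0: "u \<longlonglongrightarrow> 0" unfolding u_def
      using LIMSEQ_inverse_real_of_nat by (simp add: inverse_eq_divide add.commute)
    have "filterlim (\<lambda>n. u n * z / 2) (at 0) sequentially"
      unfolding filterlim_at using upos False
      by (auto intro!: tendsto_eq_intros u0 always_eventually simp: less_imp_neq[OF upos, symmetric])
    from filterlim_compose[OF sinc_at_0 this]
    have "(\<lambda>n. sin (u n * z / 2) / (u n * z / 2)) \<longlonglongrightarrow> 1" .
    then have "(\<lambda>n. z^2 * (sin (u n * z / 2) / (u n * z / 2))^2) \<longlonglongrightarrow> z^2 * 1^2"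
      by (intro tendsto_intros)
    then show ?thesis by (simp only: eq power_one mult_1_right)
  qed
  have "(\<integral>\<^sup>+ \<omega>. ennreal ((Z \<omega>)^2) \<partial>M) = (\<integral>\<^sup>+ \<omega>. liminf (\<lambda>n. f n \<omega>) \<partial>M)"
  proof (rule nn_integral_cong)
    fix \<omega>
    have "(\<lambda>n. f n \<omega>) \<longlonglongrightarrow> ennreal ((Z \<omega>)^2)"
      unfolding f_def by (intro tendsto_ennrealI lim)
    then show "ennreal ((Z \<omega>)^2) = liminf (\<lambda>n. f n \<omega>)"
      by (simp add: lim_imp_Liminf)
  qed
  also have "\<dots> \<le> liminf (\<lambda>n. integral\<^sup>N M (f n))"
    by (rule nn_integral_liminf[OF fm])
  also have "\<dots> \<le> ennreal V"
    by (rule order_trans[OF Liminf_le_Limsup[OF trivial_limit_sequentially] Limsup_bounded])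
       (use intf in auto)
  finally show "(\<integral>\<^sup>+ \<omega>. ennreal ((Z \<omega>)^2) \<partial>M) \<le> ennreal V" .
qed



definition comb :: "nat \<Rightarrow> (nat \<Rightarrow> real) \<Rightarrow> (nat \<Rightarrow> real) \<Rightarrow> (real \<Rightarrow> real) \<Rightarrow> real" where
  "comb n c \<tau> X = (\<Sum>j<n. c j * X (\<tau> j))"

definition fin_comb :: "((real \<Rightarrow> real) \<Rightarrow> real) \<Rightarrow> bool" where
  "fin_comb L \<longleftrightarrow> (\<exists>n c \<tau>. (\<forall>j<n. 0 \<le> \<tau> j) \<and> L = comb n c \<tau>)"

definition QF :: "(real \<Rightarrow> real \<Rightarrow> real) \<Rightarrow> ((real \<Rightarrow> real) \<Rightarrow> real) \<Rightarrow> real" where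
  "QF K L = L (\<lambda>x. L (\<lambda>y. K x y))"

definition BF :: "(real \<Rightarrow> real \<Rightarrow> real) \<Rightarrow> ((real \<Rightarrow> real) \<Rightarrow> real) \<Rightarrow> ((real \<Rightarrow> real) \<Rightarrow> real) \<Rightarrow> real" where
  "BF K L1 L2 = L1 (\<lambda>x. L2 (\<lambda>y. K x y))"

lemma sum_lessThan_add_split:
  "(\<Sum>j<m + n. f j) = (\<Sum>j<m. f j) + (\<Sum>j<n. f (m + j)) " for f :: "nat \<Rightarrow> real"
  by (induction n) (simp_all add: add.assoc)

lemma fin_comb_eval: "0 \<le> a \<Longrightarrow> fin_comb (\<lambda>X. X a)"
  unfolding fin_comb_def
  by (rule exI[of _ 1], rule exI[of _ "\<lambda>_. 1"], rule exI[of _ "\<lambda>_. a"]) (auto simp: comb_def fun_eq_iff)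

lemma fin_comb_zero: "fin_comb (\<lambda>X. 0)"
  unfolding fin_comb_def
  by (rule exI[of _ 0]) (auto simp: comb_def fun_eq_iff)

lemma fin_comb_scale: "fin_comb L \<Longrightarrow> fin_comb (\<lambda>X. c * L X)"
  unfolding fin_comb_def
proof (elim exE conjE)
  fix n d \<tau> assume "\<forall>j<n. 0 \<le> \<tau> j" "L = comb n d \<tau>"
  then show "\<exists>n d \<tau>. (\<forall>j<n. 0 \<le> \<tau> j) \<and> (\<lambda>X. c * L X) = comb n d \<tau>"
    by (intro exI[of _ n] exI[of _ "\<lambda>j. c * d j"] exI[of _ \<tau>])
       (auto simp: comb_def fun_eq_iff sum_distrib_left mult.assoc)
qed

lemma fin_comb_add: "fin_comb L1 \<Longrightarrow> fin_comb L2 \<Longrightarrow> fin_comb (\<lambda>X. L1 X + L2 X)"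
  unfolding fin_comb_def
proof (elim exE conjE)
  fix n1 c1 \<tau>1 n2 c2 \<tau>2
  assume h: "\<forall>j<n1. 0 \<le> \<tau>1 j" "L1 = comb n1 c1 \<tau>1" "\<forall>j<n2. 0 \<le> \<tau>2 j" "L2 = comb n2 c2 \<tau>2"
  define c where "c j = (if j < n1 then c1 j else c2 (j - n1))" for j
  define \<tau> where "\<tau> j = (if j < n1 then \<tau>1 j else \<tau>2 (j - n1))" for j
  have "comb (n1 + n2) c \<tau> X = comb n1 c1 \<tau>1 X + comb n2 c2 \<tau>2 X" for X
    unfolding comb_def sum_lessThan_add_split c_def \<tau>_def by simp
  moreover have "\<forall>j<n1+n2. 0 \<le> \<tau> j" using h by (auto simp: \<tau>_def)
  ultimately show "\<exists>n c \<tau>. (\<forall>j<n. 0 \<le> \<tau> j) \<and> (\<lambda>X. L1 X + L2 X) = comb n c \<tau>"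
    using h by (intro exI[of _ "n1+n2"] exI[of _ c] exI[of _ \<tau>]) (auto simp: fun_eq_iff)
qed

lemma fin_comb_diff: "fin_comb L1 \<Longrightarrow> fin_comb L2 \<Longrightarrow> fin_comb (\<lambda>X. L1 X - L2 X)"
  using fin_comb_add[OF _ fin_comb_scale[of L2 "-1"], of L1] by simp

lemma fin_comb_sum: "(\<And>k. k < (N::nat) \<Longrightarrow> fin_comb (L k)) \<Longrightarrow> fin_comb (\<lambda>X. \<Sum>k<N. L k X)"
proof (induction N)
  case 0 then show ?case using fin_comb_zero by simp
next
  case (Suc N)
  then show ?case using fin_comb_add[of "\<lambda>X. \<Sum>k<N. L k X" "L N"] by simp
qed

lemma fin_comb_linear:
  assumes "fin_comb L"
  shows "L (\<lambda>y. a * f y + b * g y) = a * L f + b * L g"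
  using assms unfolding fin_comb_def comb_def
  by (auto simp: sum.distrib sum_distrib_left algebra_simps)

lemma fin_comb_BF_sym:
  assumes "fin_comb L1" "fin_comb L2" "\<And>x y. K x y = K y x"
  shows "BF K L1 L2 = BF K L2 L1"
proof -
  obtain n c \<tau> where 1: "L1 = comb n c \<tau>" using assms(1) unfolding fin_comb_def by blast
  obtain m d \<sigma> where 2: "L2 = comb m d \<sigma>" using assms(2) unfolding fin_comb_def by blast
  have "BF K L1 L2 = (\<Sum>i<n. \<Sum>j<m. c i * d j * K (\<tau> i) (\<sigma> j))"
    unfolding BF_def 1 2 comb_def by (simp add: sum_distrib_left mult.assoc)
  also have "\<dots> = (\<Sum>j<m. \<Sum>i<n. c i * d j * K (\<tau> i) (\<sigma> j))" by (rule sum.swap)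
  also have "\<dots> = BF K L2 L1"
    unfolding BF_def 1 2 comb_def by (simp add: sum_distrib_left mult.assoc mult.left_commute assms(3))
  finally show ?thesis .
qed

lemma regroup:
  "comb n c \<tau> Y = (\<Sum>x\<in>\<tau> ` {..<n}. (\<Sum>j\<in>{j\<in>{..<n}. \<tau> j = x}. c j) * Y x)"
  unfolding comb_def
  by (subst sum.image_gen[where g=\<tau>]) (auto simp: sum_distrib_right intro!: sum.cong)

lemma gauss_comb:
  assumes P: "prob_space M" and G: "centered_gaussian_family M X {0..} K"
    and L: "fin_comb L"
  shows "0 \<le> QF K L" "(\<lambda>\<omega>. L (\<lambda>t. X t \<omega>)) \<in> borel_measurable M"
    "(\<integral>\<^sup>+ \<omega>. ennreal ((L (\<lambda>t. X t \<omega>))^2) \<partial>M) \<le> ennreal (QF K L)"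
proof -
  obtain n c \<tau> where \<tau>: "\<forall>j<n. 0 \<le> \<tau> j" and Ld: "L = comb n c \<tau>"
    using L unfolding fin_comb_def by blast
  define F where "F = \<tau> ` {..<n}"
  define C where "C x = (\<Sum>j\<in>{j\<in>{..<n}. \<tau> j = x}. c j)" for x
  have Lr: "L Y = (\<Sum>x\<in>F. C x * Y x)" for Y
    unfolding Ld regroup F_def C_def ..
  have F: "finite F" "F \<subseteq> {0..}" using \<tau> by (auto simp: F_def)
  have Q: "QF K L = (\<Sum>i\<in>F. \<Sum>j\<in>F. C i * C j * K i j)"
    unfolding QF_def Lr by (simp add: sum_distrib_left mult.assoc)
  have meas: "\<And>i. i \<in> {0..} \<Longrightarrow> X i \<in> borel_measurable M"
    and ch: "\<And>F c u. finite F \<Longrightarrow> F \<subseteq> {0..} \<Longrightarrow>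
        char (distr M borel (\<lambda>\<omega>. \<Sum>i\<in>F. c i * X i \<omega>)) u =
        complex_of_real (exp (- (u^2 * (\<Sum>i\<in>F. \<Sum>j\<in>F. c i * c j * K i j)) / 2))"
    using G unfolding centered_gaussian_family_def by auto
  have Zm: "(\<lambda>\<omega>. \<Sum>i\<in>F. C i * X i \<omega>) \<in> borel_measurable M"
    using F meas by (intro borel_measurable_sum borel_measurable_times) auto
  note gb = gauss_sq_bound[OF P Zm ch[OF F], unfolded Q[symmetric]]
  show "0 \<le> QF K L" by (rule gb(1))
  have e: "(\<lambda>\<omega>. L (\<lambda>t. X t \<omega>)) = (\<lambda>\<omega>. \<Sum>i\<in>F. C i * X i \<omega>)" using Lr by simp
  show "(\<lambda>\<omega>. L (\<lambda>t. X t \<omega>)) \<in> borel_measurable M" unfolding e by (rule Zm)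
  show "(\<integral>\<^sup>+ \<omega>. ennreal ((L (\<lambda>t. X t \<omega>))^2) \<partial>M) \<le> ennreal (QF K L)"
    using gb(2) by (simp add: Lr)
qed

lemma QF_add_scaled:
  assumes "fin_comb L1" "fin_comb L2" "\<And>x y. K x y = K y x"
  shows "QF K (\<lambda>X. L1 X + a * L2 X) = QF K L1 + 2 * a * BF K L1 L2 + a^2 * QF K L2"
proof -
  have "QF K (\<lambda>X. L1 X + a * L2 X)
     = L1 (\<lambda>x. 1 * L1 (K x) + a * L2 (K x)) + a * L2 (\<lambda>x. 1 * L1 (K x) + a * L2 (K x))"
    unfolding QF_def by simp
  also have "\<dots> = QF K L1 + a * BF K L1 L2 + a * (BF K L2 L1 + a * QF K L2)"
    unfolding fin_comb_linear[OF assms(1)] fin_comb_linear[OF assms(2)] QF_def BF_def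
    by (simp add: algebra_simps)
  also have "\<dots> = QF K L1 + 2 * a * BF K L1 L2 + a^2 * QF K L2"
    using fin_comb_BF_sym[OF assms(2,1,3)] by (simp add: algebra_simps power2_eq_square)
  finally show ?thesis .
qed

lemma QF_triangle:
  assumes psd: "\<And>L. fin_comb L \<Longrightarrow> 0 \<le> QF K L" and sym: "\<And>x y. K x y = K y x"
    and L1: "fin_comb L1" and L2: "fin_comb L2"
  shows "sqrt (QF K (\<lambda>X. L1 X + L2 X)) \<le> sqrt (QF K L1) + sqrt (QF K L2)"
proof -
  define A where "A = QF K L1"
  define B where "B = BF K L1 L2"
  define C where "C = QF K L2"
  have nn: "0 \<le> A + 2 * x * B + x^2 * C" for x
    using psd[OF fin_comb_add[OF L1 fin_comb_scale[OF L2, of x]]]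
    unfolding QF_add_scaled[OF L1 L2 sym] A_def B_def C_def .
  have A0: "0 \<le> A" "0 \<le> C" using psd L1 L2 by (auto simp: A_def C_def)
  have BB: "B \<le> sqrt A * sqrt C"
  proof (cases "C = 0")
    case True
    have "B = 0"
    proof (rule ccontr)
      assume "B \<noteq> 0"
      then have "0 \<le> A + 2 * (- (A + 1) / (2 * B)) * B" using nn[of "- (A + 1) / (2 * B)"] True by simp
      also have "\<dots> = -1" using \<open>B \<noteq> 0\<close> by (simp add: field_simps)
      finally show False by simp
    qed
    then show ?thesis using A0 by simp
  next
    case False
    then have Cp: "C > 0" using A0 by simp
    have "0 \<le> A + 2 * (- B / C) * B + (- B / C)^2 * C" by (rule nn)
    also have "\<dots> = A - B^2 / C" using Cp by (simp add: field_simps power2_eq_square)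
    finally have "B^2 \<le> A * C" using Cp by (simp add: field_simps)
    then have "sqrt (B^2) \<le> sqrt (A * C)" by (rule real_sqrt_le_mono)
    then show ?thesis by (simp add: real_sqrt_mult)
  qed
  have "QF K (\<lambda>X. L1 X + L2 X) = A + 2 * B + C"
    using QF_add_scaled[OF L1 L2 sym, where a=1] by (simp add: A_def B_def C_def)
  also have "\<dots> \<le> (sqrt A + sqrt C)^2"
    using BB A0 by (simp add: power2_sum)
  finally have "sqrt (QF K (\<lambda>X. L1 X + L2 X)) \<le> sqrt ((sqrt A + sqrt C)^2)"
    by (rule real_sqrt_le_mono)
  also have "\<dots> = sqrt A + sqrt C" using A0 by simp
  finally show ?thesis by (simp add: A_def C_def)
qed

lemma QF_triangle_sum:
  assumes psd: "\<And>L. fin_comb L \<Longrightarrow> 0 \<le> QF K L" and sym: "\<And>x y. K x y = K y x"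
    and L: "\<And>k. k < (N::nat) \<Longrightarrow> fin_comb (L k)"
  shows "sqrt (QF K (\<lambda>X. \<Sum>k<N. L k X)) \<le> (\<Sum>k<N. sqrt (QF K (L k)))"
  using L
proof (induction N)
  case 0
  then show ?case by (simp add: QF_def)
next
  case (Suc N)
  have "sqrt (QF K (\<lambda>X. \<Sum>k<Suc N. L k X)) = sqrt (QF K (\<lambda>X. (\<Sum>k<N. L k X) + L N X))" by simp
  also have "\<dots> \<le> sqrt (QF K (\<lambda>X. \<Sum>k<N. L k X)) + sqrt (QF K (L N))"
    by (rule QF_triangle[OF psd sym fin_comb_sum]) (use Suc.prems in auto)
  also have "\<dots> \<le> (\<Sum>k<N. sqrt (QF K (L k))) + sqrt (QF K (L N))"
    using Suc by simp
  finally show ?case by simp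
qed



definition psi :: "real \<Rightarrow> real \<Rightarrow> real \<Rightarrow> real" where
  "psi p v x = (x + v) powr p - x powr p"

definition Kinc :: "real \<Rightarrow> real \<Rightarrow> real \<Rightarrow> real" where
  "Kinc p v d = (\<bar>d + v\<bar> powr p + \<bar>d - v\<bar> powr p - 2 * \<bar>d\<bar> powr p) / 2"

lemma psi_antitone:
  assumes p: "0 < p" "p < 1" and v: "0 \<le> v" and xy: "0 \<le> x" "x \<le> y"
  shows "psi p v y \<le> psi p v x"
  unfolding psi_def
proof (rule DERIV_nonpos_imp_decreasing_open[OF xy(2)])
  fix z assume z: "x < z" "z < y"
  then have zp: "0 < z" using xy by simp
  have "((\<lambda>z. (z+v) powr p - z powr p) has_real_derivative (p * (z+v) powr (p-1) - p * z powr (p-1))) (at z)"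
    using zp v by (auto intro!: derivative_eq_intros)
  moreover have "(z+v) powr (p-1) \<le> z powr (p-1)"
    using zp v p by (intro powr_mono2') auto
  then have "p * (z+v) powr (p-1) - p * z powr (p-1) \<le> 0"
    using p by (simp add: mult_left_mono)
  ultimately show "\<exists>y. ((\<lambda>z. (z+v) powr p - z powr p) has_real_derivative y) (at z) \<and> y \<le> 0"
    by blast
next
  show "continuous_on {x..y} (\<lambda>z. (z + v) powr p - z powr p)"
    using xy v p by (intro continuous_intros continuous_on_powr') auto
qed

lemma psi_nonneg: "0 \<le> p \<Longrightarrow> 0 \<le> v \<Longrightarrow> 0 \<le> x \<Longrightarrow> 0 \<le> psi p v x"
  unfolding psi_def by (simp add: powr_mono2)

lemma psi_zero: "psi p v 0 = v powr p"
  unfolding psi_def by simp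

lemma Kinc_even: "Kinc p v (- d) = Kinc p v d"
  unfolding Kinc_def by (simp add: abs_minus_commute add.commute)

lemma Kinc_far:
  assumes p: "0 < p" "p < 1" and v: "0 \<le> v" "v \<le> h" and m: "1 \<le> m"
  shows "\<bar>Kinc p v (m * h)\<bar> \<le> (psi p v ((m - 1) * h) - psi p v (m * h)) / 2"
proof -
  have h0: "0 \<le> h" using v by simp
  have d: "v \<le> m * h" using v m h0 mult_right_mono[of 1 m h] by simp
  have K: "Kinc p v (m * h) = (psi p v (m * h) - psi p v (m * h - v)) / 2"
    unfolding Kinc_def psi_def using d v by simp
  have a: "psi p v (m * h) \<le> psi p v (m * h - v)"
    using p v d by (intro psi_antitone) auto
  have b: "psi p v (m * h - v) \<le> psi p v ((m - 1) * h)"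
    using p v m h0 mult_right_mono[of 1 m h] by (intro psi_antitone) (auto simp: algebra_simps)
  show ?thesis unfolding K using a b by simp
qed

lemma row_bound:
  assumes p: "0 < p" "p < 1" and v: "0 \<le> v" "v \<le> h" and k: "k < N"
  shows "(\<Sum>j<N. \<bar>Kinc p v ((real k - real j) * h)\<bar>) \<le> 2 * v powr p"
proof -
  have h0: "0 \<le> h" using v by simp
  define T where "T j = psi p v ((real k - real j) * h) / 2" for j :: nat
  define U where "U j = psi p v ((real j - real k - 1) * h) / 2" for j :: nat
  have s1: "(\<Sum>j<k. \<bar>Kinc p v ((real k - real j) * h)\<bar>) \<le> v powr p / 2"
  proof -
    have "(\<Sum>j<k. \<bar>Kinc p v ((real k - real j) * h)\<bar>) \<le> (\<Sum>j<k. T (Suc j) - T j)"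
    proof (rule sum_mono)
      fix j assume "j \<in> {..<k}"
      then have "1 \<le> real k - real j" by auto
      from Kinc_far[OF p v this]
      show "\<bar>Kinc p v ((real k - real j) * h)\<bar> \<le> T (Suc j) - T j"
        unfolding T_def by (simp add: diff_divide_distrib algebra_simps)
    qed
    also have "\<dots> = T k - T 0" by (rule sum_lessThan_telescope)
    also have "\<dots> \<le> v powr p / 2"
      using psi_nonneg[of p v "real k * h"] p v h0 by (simp add: T_def psi_zero)
    finally show ?thesis .
  qed
  have s2: "(\<Sum>j\<in>{Suc k..<N}. \<bar>Kinc p v ((real k - real j) * h)\<bar>) \<le> v powr p / 2"
  proof -
    have "(\<Sum>j\<in>{Suc k..<N}. \<bar>Kinc p v ((real k - real j) * h)\<bar>) \<le> (\<Sum>j\<in>{Suc k..<N}. - (U (Suc j) - U j))"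
    proof (rule sum_mono)
      fix j assume "j \<in> {Suc k..<N}"
      then have j1: "1 \<le> real j - real k" by auto
      have "Kinc p v ((real k - real j) * h) = Kinc p v ((real j - real k) * h)"
        using Kinc_even[of p v "(real j - real k) * h"] by (simp add: algebra_simps)
      with Kinc_far[OF p v j1]
      show "\<bar>Kinc p v ((real k - real j) * h)\<bar> \<le> - (U (Suc j) - U j)"
        unfolding U_def by (simp add: diff_divide_distrib algebra_simps)
    qed
    also have "\<dots> = - (\<Sum>j\<in>{Suc k..<N}. U (Suc j) - U j)" by (simp only: sum_negf)
    also have "\<dots> = U (Suc k) - U N" using k by (subst sum_Suc_diff') auto
    also have "\<dots> \<le> v powr p / 2"
      using psi_nonneg[of p v "(real N - real k - 1) * h"] p v h0 k by (simp add: U_def psi_zero)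
    finally show ?thesis .
  qed
  have K0: "\<bar>Kinc p v ((real k - real k) * h)\<bar> = v powr p"
    unfolding Kinc_def using v by simp
  have "(\<Sum>j<N. \<bar>Kinc p v ((real k - real j) * h)\<bar>)
      = (\<Sum>j<k. \<bar>Kinc p v ((real k - real j) * h)\<bar>) + \<bar>Kinc p v ((real k - real k) * h)\<bar>
        + (\<Sum>j\<in>{Suc k..<N}. \<bar>Kinc p v ((real k - real j) * h)\<bar>)"
  proof -
    have "{..<N} = {..<k} \<union> {k} \<union> {Suc k..<N}" using k by auto
    moreover have "(\<Sum>j\<in>{..<k} \<union> {Suc k..<N}. \<bar>Kinc p v ((real k - real j) * h)\<bar>)
      = (\<Sum>j<k. \<bar>Kinc p v ((real k - real j) * h)\<bar>) + (\<Sum>j\<in>{Suc k..<N}. \<bar>Kinc p v ((real k - real j) * h)\<bar>)"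
      by (rule sum.union_disjoint) auto
    ultimately show ?thesis by simp
  qed
  then show ?thesis using s1 s2 K0 by simp
qed



lemma QF_incr_gen:
  "QF R (\<lambda>X. \<Sum>k<N. c k * (X (x k) - X (y k)))
   = (\<Sum>k<N. \<Sum>j<N. c k * c j * (R (x k) (x j) - R (x k) (y j) - R (y k) (x j) + R (y k) (y j)))"
  unfolding QF_def
  by (simp add: sum_distrib_left sum_subtractf[symmetric] right_diff_distrib mult.assoc
      flip: sum.distrib) (simp add: algebra_simps)

lemma QF_incr:
  "QF (fbm_cov H) (\<lambda>X. \<Sum>k<N. c k * (X (b + real k * h) - X (b + real k * h - v)))
   = (\<Sum>k<N. \<Sum>j<N. c k * c j * Kinc (2*H) v ((real k - real j) * h))"
  unfolding QF_incr_gen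
proof (intro sum.cong refl)
  fix k j
  have "fbm_cov H (b + real k * h) (b + real j * h) - fbm_cov H (b + real k * h) (b + real j * h - v)
      - fbm_cov H (b + real k * h - v) (b + real j * h) + fbm_cov H (b + real k * h - v) (b + real j * h - v)
      = Kinc (2*H) v ((real k - real j) * h)"
  proof -
    have e1: "\<bar>b + real k * h - (b + real j * h - v)\<bar> = \<bar>(real k - real j) * h + v\<bar>"
      by (simp add: algebra_simps)
    have e2: "\<bar>b + real k * h - v - (b + real j * h)\<bar> = \<bar>(real k - real j) * h - v\<bar>"
      by (simp add: algebra_simps)
    have e3: "\<bar>b + real k * h - (b + real j * h)\<bar> = \<bar>(real k - real j) * h\<bar>"
      by (simp add: algebra_simps)
    have e4: "\<bar>b + real k * h - v - (b + real j * h - v)\<bar> = \<bar>(real k - real j) * h\<bar>"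
      by (simp add: algebra_simps)
    show ?thesis unfolding fbm_cov_def Kinc_def e1 e2 e3 e4 by (simp add: field_simps)
  qed
  then show "c k * c j * (fbm_cov H (b + real k * h) (b + real j * h) - fbm_cov H (b + real k * h) (b + real j * h - v)
      - fbm_cov H (b + real k * h - v) (b + real j * h) + fbm_cov H (b + real k * h - v) (b + real j * h - v))
    = c k * c j * Kinc (2*H) v ((real k - real j) * h)" by simp
qed

lemma fin_comb_incr:
  assumes "0 \<le> h" "v \<le> b" "0 \<le> v"
  shows "fin_comb (\<lambda>X. \<Sum>k<N. c k * (X (b + real k * h) - X (b + real k * h - v)))"
proof -
  have "0 \<le> real k * h" for k using assms by simp
  then have "0 \<le> b + real k * h \<and> 0 \<le> b + real k * h - v" for k using assms
    by (smt (verit))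
  then show ?thesis by (intro fin_comb_sum fin_comb_scale fin_comb_diff fin_comb_eval) auto
qed

lemma incr_bound:
  assumes H: "0 < H" "H < 1/2" and v: "0 \<le> v" "v \<le> h" and c: "\<And>k. k < N \<Longrightarrow> \<bar>c k\<bar> \<le> G"
  shows "QF (fbm_cov H) (\<lambda>X. \<Sum>k<N. c k * (X (b + real k * h) - X (b + real k * h - v)))
     \<le> 2 * G^2 * real N * v powr (2*H)"
proof -
  have p: "0 < 2*H" "2*H < 1" using H by auto
  have G0: "0 \<le> G" if "0 < N" using c[of 0] that by simp
  have "(\<Sum>k<N. \<Sum>j<N. c k * c j * Kinc (2*H) v ((real k - real j) * h))
      \<le> (\<Sum>k<N. \<Sum>j<N. G^2 * \<bar>Kinc (2*H) v ((real k - real j) * h)\<bar>)"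
  proof (intro sum_mono)
    fix k j assume k: "k \<in> {..<N}" and j: "j \<in> {..<N}"
    have "c k * c j * Kinc (2*H) v ((real k - real j) * h) \<le> \<bar>c k * c j * Kinc (2*H) v ((real k - real j) * h)\<bar>"
      by simp
    also have "\<dots> = \<bar>c k\<bar> * \<bar>c j\<bar> * \<bar>Kinc (2*H) v ((real k - real j) * h)\<bar>" by (simp add: abs_mult)
    also have "\<dots> \<le> G * G * \<bar>Kinc (2*H) v ((real k - real j) * h)\<bar>"
    proof -
      have G0: "0 \<le> G" using c[of k] k by simp
      show ?thesis using c k j G0 by (intro mult_right_mono mult_mono) auto
    qed
    finally show "c k * c j * Kinc (2*H) v ((real k - real j) * h) \<le> G^2 * \<bar>Kinc (2*H) v ((real k - real j) * h)\<bar>"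
      by (simp add: power2_eq_square)
  qed
  also have "\<dots> = G^2 * (\<Sum>k<N. \<Sum>j<N. \<bar>Kinc (2*H) v ((real k - real j) * h)\<bar>)"
    by (simp add: sum_distrib_left)
  also have "\<dots> \<le> G^2 * (\<Sum>k<N. 2 * v powr (2*H))"
    by (intro mult_left_mono sum_mono row_bound[OF p v]) auto
  also have "\<dots> = 2 * G^2 * real N * v powr (2*H)" by simp
  finally show ?thesis unfolding QF_incr .
qed



lemma abel_sum:
  "(\<Sum>l<n. G l * (Y (Suc l) - Y l)) = G 0 * (Y n - Y 0) + (\<Sum>m<n. (G (Suc m) - G m) * (Y n - Y (Suc m)))"
  for G Y :: "nat \<Rightarrow> real"
proof (induction n)
  case 0 then show ?case by simp
next
  case (Suc n)
  have "(\<Sum>m<Suc n. (G (Suc m) - G m) * (Y (Suc n) - Y (Suc m)))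
      = (\<Sum>m<n. (G (Suc m) - G m) * (Y (Suc n) - Y (Suc m)))" by simp
  also have "\<dots> = (\<Sum>m<n. (G (Suc m) - G m) * (Y n - Y (Suc m)) + (G (Suc m) - G m) * (Y (Suc n) - Y n))"
    by (rule sum.cong) (simp_all add: algebra_simps)
  also have "\<dots> = (\<Sum>m<n. (G (Suc m) - G m) * (Y n - Y (Suc m))) + (\<Sum>m<n. (G (Suc m) - G m)) * (Y (Suc n) - Y n)"
    by (simp add: sum.distrib sum_distrib_right)
  also have "(\<Sum>m<n. (G (Suc m) - G m)) = G n - G 0" by (rule sum_lessThan_telescope)
  finally show ?case using Suc by (simp add: algebra_simps)
qed

lemma sum_blocks:
  "(\<Sum>j<N*n. f j) = (\<Sum>k<N. \<Sum>l<n. f (k*n + l))" for f :: "nat \<Rightarrow> real"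
proof (induction N)
  case 0 then show ?case by simp
next
  case (Suc N)
  have "(\<Sum>j<Suc N * n. f j) = (\<Sum>j<N*n + n. f j)" by (simp add: add.commute)
  also have "\<dots> = (\<Sum>j<N*n. f j) + (\<Sum>l<n. f (N*n + l))" by (rule sum_lessThan_add_split)
  finally show ?case using Suc by simp
qed

lemma fbm_cov_sym: "fbm_cov H x y = fbm_cov H y x"
  unfolding fbm_cov_def by (simp add: abs_minus_commute add.commute)

definition RSsum :: "(real \<Rightarrow> real) \<Rightarrow> real \<Rightarrow> real \<Rightarrow> nat \<Rightarrow> (real \<Rightarrow> real) \<Rightarrow> real" where
  "RSsum g s t n X = (\<Sum>j<n. g (s + real j * ((t - s) / real n)) *
      (X (s + real (Suc j) * ((t - s) / real n)) - X (s + real j * ((t - s) / real n))))"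

lemma block_bound:
  assumes H: "0 < H" "H < 1/2"
    and psd: "\<And>L. fin_comb L \<Longrightarrow> 0 \<le> QF (fbm_cov H) L"
    and s: "0 \<le> s" and h: "0 < h" and N: "1 \<le> N" and n: "1 \<le> n"
    and gG: "\<And>x. s \<le> x \<Longrightarrow> x \<le> s + real N * h \<Longrightarrow> \<bar>g x\<bar> \<le> G"
    and gL: "\<And>x y. s \<le> x \<Longrightarrow> x \<le> s + real N * h \<Longrightarrow> s \<le> y \<Longrightarrow> y \<le> s + real N * h
              \<Longrightarrow> \<bar>g x - g y\<bar> \<le> L * \<bar>x - y\<bar>"
  shows "fin_comb (RSsum g s (s + real N * h) (N * n))"
    "QF (fbm_cov H) (RSsum g s (s + real N * h) (N * n)) \<le> 2 * real N * h powr (2*H) * (G + L * h)^2"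
proof -
  define r where "r j = s + real j * (h / real n)" for j :: nat
  have rr: "s + real j * ((s + real N * h - s) / real (N * n)) = r j" for j
    using N n by (simp add: r_def field_simps)
  have RSr: "RSsum g s (s + real N * h) (N * n) X = (\<Sum>j<N*n. g (r j) * (X (r (Suc j)) - X (r j)))" for X
    unfolding RSsum_def rr ..
  define v where "v m = real (n - Suc m) * (h / real n)" for m :: nat
  define Lmain where "Lmain X = (\<Sum>k<N. g (s + real k * h) * (X ((s + h) + real k * h) - X ((s + h) + real k * h - h)))" for X
  define Lm where "Lm m X = (\<Sum>k<N. (g (r (k*n + Suc m)) - g (r (k*n + m))) * (X ((s + h) + real k * h) - X ((s + h) + real k * h - v m)))" for m X
  have pos1: "r (k*n + n) = (s + h) + real k * h" for k
    using n by (simp add: r_def field_simps)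
  have pos2: "r (k*n) = (s + h) + real k * h - h" for k
    using n by (simp add: r_def field_simps)
  have pos3: "r (k*n + Suc m) = (s + h) + real k * h - v m" if "m < n" for k m
  proof -
    have "real (n - Suc m) = real n - real m - 1" using that by (simp add: of_nat_diff)
    then show ?thesis using n by (simp add: r_def v_def field_simps)
  qed
  have decomp: "RSsum g s (s + real N * h) (N * n) = (\<lambda>X. Lmain X + (\<Sum>m<n. Lm m X))"
  proof
    fix X
    have "RSsum g s (s + real N * h) (N * n) X = (\<Sum>k<N. \<Sum>l<n. g (r (k*n+l)) * (X (r (Suc (k*n+l))) - X (r (k*n+l))))"
      unfolding RSr sum_blocks ..
    also have "\<dots> = (\<Sum>k<N. g (r (k*n)) * (X (r (k*n+n)) - X (r (k*n)))
        + (\<Sum>m<n. (g (r (k*n + Suc m)) - g (r (k*n + m))) * (X (r (k*n+n)) - X (r (k*n + Suc m)))))"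
    proof (rule sum.cong[OF refl])
      fix k
      show "(\<Sum>l<n. g (r (k*n+l)) * (X (r (Suc (k*n+l))) - X (r (k*n+l))))
        = g (r (k*n)) * (X (r (k*n+n)) - X (r (k*n)))
        + (\<Sum>m<n. (g (r (k*n + Suc m)) - g (r (k*n + m))) * (X (r (k*n+n)) - X (r (k*n + Suc m))))"
        using abel_sum[of "\<lambda>l. g (r (k*n+l))" "\<lambda>l. X (r (k*n+l))" n] by simp
    qed
    also have "\<dots> = Lmain X + (\<Sum>k<N. \<Sum>m<n. (g (r (k*n + Suc m)) - g (r (k*n + m))) * (X ((s + h) + real k * h) - X ((s + h) + real k * h - v m)))"
      unfolding sum.distrib Lmain_def
    proof (intro arg_cong2[where f="(+)"] sum.cong refl)
      fix k
      have a: "r (k*n) = s + real k * h" using n by (simp add: r_def)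
      have b: "(s + h) + real k * h - h = s + real k * h" by simp
      show "g (r (k*n)) * (X (r (k*n+n)) - X (r (k*n))) = g (s + real k * h) * (X ((s + h) + real k * h) - X ((s + h) + real k * h - h))"
        unfolding pos1 a b ..
    next
      fix k m assume m: "m \<in> {..<n}"
      have e: "X (r (k*n + Suc m)) = X ((s + h) + real k * h - v m)" using pos3[of m k] m by simp
      show "(g (r (k*n + Suc m)) - g (r (k*n + m))) * (X (r (k*n+n)) - X (r (k*n + Suc m)))
          = (g (r (k*n + Suc m)) - g (r (k*n + m))) * (X ((s + h) + real k * h) - X ((s + h) + real k * h - v m))"
        unfolding pos1 e ..
    qed
    also have "\<dots> = Lmain X + (\<Sum>m<n. Lm m X)"
      unfolding Lm_def by (subst sum.swap) simp
    finally show "RSsum g s (s + real N * h) (N * n) X = Lmain X + (\<Sum>m<n. Lm m X)" .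
  qed
  have vh: "0 \<le> v m" "v m \<le> h" for m
  proof -
    show "0 \<le> v m" using h by (simp add: v_def)
    have "real (n - Suc m) \<le> real n" by simp
    then have "real (n - Suc m) * (h / real n) \<le> real n * (h / real n)"
      using h by (intro mult_right_mono) auto
    then show "v m \<le> h" using n by (simp add: v_def)
  qed
  have fm: "fin_comb Lmain"
    unfolding Lmain_def using s h by (intro fin_comb_incr) auto
  have fmm: "fin_comb (Lm m)" for m
    unfolding Lm_def using s h vh[of m] by (intro fin_comb_incr) auto
  show fRS: "fin_comb (RSsum g s (s + real N * h) (N * n))"
    unfolding decomp by (intro fin_comb_add fm fin_comb_sum fmm)
  have G0: "0 \<le> G" using gG[of s] h by simp
  have L0: "0 \<le> L"
  proof -
    have "real N * h \<ge> h" using h N mult_right_mono[of 1 "real N" h] by simp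
    then have "\<bar>g (s + h) - g s\<bar> \<le> L * \<bar>s + h - s\<bar>" using h by (intro gL) auto
    then have "0 \<le> L * \<bar>s + h - s\<bar>" by (rule order_trans[OF abs_ge_zero])
    then show ?thesis using h by (simp add: zero_le_mult_iff)
  qed
  define W where "W = sqrt (2 * real N * h powr (2*H))"
  have W0: "0 \<le> W" unfolding W_def by simp
  have Qmain: "sqrt (QF (fbm_cov H) Lmain) \<le> G * W"
  proof -
    have "QF (fbm_cov H) Lmain \<le> 2 * G^2 * real N * h powr (2*H)"
      unfolding Lmain_def
    proof (rule incr_bound[OF H _ order_refl])
      fix k assume "k < N"
      then have "real k * h \<le> real N * h" using h by simp
      then show "\<bar>g (s + real k * h)\<bar> \<le> G" using h by (intro gG) auto
    qed (use h in auto)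
    then have "sqrt (QF (fbm_cov H) Lmain) \<le> sqrt (G^2 * (2 * real N * h powr (2*H)))"
      by (intro real_sqrt_le_mono) (simp add: algebra_simps)
    then show ?thesis using G0 by (simp add: real_sqrt_mult W_def)
  qed
  have Qm: "sqrt (QF (fbm_cov H) (Lm m)) \<le> (L * h / real n) * W" if "m < n" for m
  proof -
    have "QF (fbm_cov H) (Lm m) \<le> 2 * (L * h / real n)^2 * real N * (v m) powr (2*H)"
      unfolding Lm_def
    proof (rule incr_bound[OF H vh])
      fix k assume k: "k < N"
      have kn: "k * n + Suc m \<le> N * n"
      proof -
        have "k * n + Suc m \<le> k * n + n" using that by simp
        also have "\<dots> = Suc k * n" by simp
        also have "\<dots> \<le> N * n" using k by (intro mult_right_mono) auto
        finally show ?thesis .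
      qed
      have rin: "s \<le> r j \<and> r j \<le> s + real N * h" if "j \<le> N * n" for j
      proof -
        have "real j \<le> real N * real n" using that by (metis of_nat_le_iff of_nat_mult)
        then have "real j * (h / real n) \<le> real N * real n * (h / real n)"
          using h by (intro mult_right_mono) auto
        then show ?thesis using n h by (simp add: r_def)
      qed
      have "\<bar>g (r (k*n + Suc m)) - g (r (k*n + m))\<bar> \<le> L * \<bar>r (k*n + Suc m) - r (k*n + m)\<bar>"
        using rin[of "k*n + Suc m"] rin[of "k*n+m"] kn by (intro gL) auto
      also have "\<bar>r (k*n + Suc m) - r (k*n + m)\<bar> = h / real n"
        using h n by (simp add: r_def algebra_simps)
      finally show "\<bar>g (r (k*n + Suc m)) - g (r (k*n + m))\<bar> \<le> L * h / real n" by simp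
    qed
    also have "\<dots> \<le> 2 * (L * h / real n)^2 * real N * h powr (2*H)"
      using vh[of m] H by (intro mult_left_mono powr_mono2) auto
    finally have "sqrt (QF (fbm_cov H) (Lm m)) \<le> sqrt ((L * h / real n)^2 * (2 * real N * h powr (2*H)))"
      by (intro real_sqrt_le_mono) (simp add: algebra_simps)
    then show ?thesis using L0 h by (simp add: real_sqrt_mult W_def)
  qed
  have "sqrt (QF (fbm_cov H) (RSsum g s (s + real N * h) (N * n)))
      \<le> sqrt (QF (fbm_cov H) Lmain) + sqrt (QF (fbm_cov H) (\<lambda>X. \<Sum>m<n. Lm m X))"
    unfolding decomp by (rule QF_triangle[OF psd fbm_cov_sym fm fin_comb_sum]) (use fmm in auto)
  also have "\<dots> \<le> G * W + (\<Sum>m<n. sqrt (QF (fbm_cov H) (Lm m)))"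
    using Qmain QF_triangle_sum[OF psd fbm_cov_sym, of n Lm] fmm by (intro add_mono) auto
  also have "\<dots> \<le> G * W + (\<Sum>m<n. (L * h / real n) * W)"
    using Qm by (intro add_mono sum_mono) auto
  also have "\<dots> = (G + L * h) * W" using n by (simp add: algebra_simps)
  finally have sq: "sqrt (QF (fbm_cov H) (RSsum g s (s + real N * h) (N * n))) \<le> (G + L * h) * W" .
  have q0: "0 \<le> QF (fbm_cov H) (RSsum g s (s + real N * h) (N * n))" by (rule psd[OF fRS])
  have "QF (fbm_cov H) (RSsum g s (s + real N * h) (N * n)) = (sqrt (QF (fbm_cov H) (RSsum g s (s + real N * h) (N * n))))^2"
    using q0 by simp
  also have "\<dots> \<le> ((G + L * h) * W)^2"
    using sq q0 by (intro power_mono) auto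
  also have "\<dots> = 2 * real N * h powr (2*H) * (G + L * h)^2"
    unfolding W_def power_mult_distrib by simp
  finally show "QF (fbm_cov H) (RSsum g s (s + real N * h) (N * n)) \<le> 2 * real N * h powr (2*H) * (G + L * h)^2" .
qed



lemma sum_by_parts:
  "(\<Sum>j<n. G j * (Y (Suc j) - Y j)) = G n * Y n - G 0 * Y 0 - (\<Sum>j<n. (G (Suc j) - G j) * Y (Suc j))"
  for G Y :: "nat \<Rightarrow> real"
  by (induction n) (simp_all add: algebra_simps)

lemma integral_grid:
  fixes f :: "real \<Rightarrow> real" and r :: "nat \<Rightarrow> real"
  assumes mono: "\<And>j. r j \<le> r (Suc j)" and f: "continuous_on {r 0..r m} f"
  shows "integral {r 0..r m} f = (\<Sum>j<m. integral {r j..r (Suc j)} f)"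
  using f
proof (induction m)
  case 0 then show ?case by simp
next
  case (Suc m)
  have le: "r 0 \<le> r m" using mono by (induction m) (auto intro: order_trans)
  have "continuous_on {r 0..r m} f"
    using Suc.prems le mono[of m] by (elim continuous_on_subset) auto
  then have IH: "integral {r 0..r m} f = (\<Sum>j<m. integral {r j..r (Suc j)} f)" by (rule Suc.IH)
  have "integral {r 0..r m} f + integral {r m..r (Suc m)} f = integral {r 0..r (Suc m)} f"
    using le mono[of m] Suc.prems
    by (intro Henstock_Kurzweil_Integration.integral_combine integrable_continuous_interval) auto
  then show ?case using IH by simp
qed

lemma riemann_conv:
  fixes g g' X :: "real \<Rightarrow> real"
  assumes st: "s < t" and cX: "continuous_on {s..t} X" and cg': "continuous_on UNIV g'"
    and dg: "\<And>x. (g has_real_derivative g' x) (at x)"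
  shows "(\<lambda>n. \<Sum>j<n. (g (s + real (Suc j) * ((t - s) / real n)) - g (s + real j * ((t - s) / real n)))
                 * X (s + real (Suc j) * ((t - s) / real n)))
         \<longlonglongrightarrow> integral {s..t} (\<lambda>r. g' r * X r)"
proof (rule LIMSEQ_I)
  fix e :: real assume e: "0 < e"
  obtain B where B: "\<And>x. x \<in> {s..t} \<Longrightarrow> \<bar>g' x\<bar> \<le> B"
  proof -
    have "compact (g' ` {s..t})"
      by (rule compact_continuous_image) (use cg' continuous_on_subset in auto)
    then obtain B where "\<forall>y\<in>g' ` {s..t}. norm y \<le> B"
      using compact_imp_bounded bounded_iff by metis
    then show ?thesis using that by force
  qed
  have B0: "0 \<le> B" using B[of s] st by (smt (verit) atLeastAtMost_iff)
  define e' where "e' = e / ((B + 1) * (t - s + 1))"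
  have e': "0 < e'" using e B0 st by (simp add: e'_def)
  have uc: "uniformly_continuous_on {s..t} X"
    by (rule compact_uniformly_continuous[OF cX]) simp
  obtain d where d: "0 < d" and dX: "\<And>x y. x \<in> {s..t} \<Longrightarrow> y \<in> {s..t} \<Longrightarrow> dist y x < d \<Longrightarrow> dist (X y) (X x) < e'"
    using uc e' unfolding uniformly_continuous_on_def by metis
  obtain N0 :: nat where N0: "(t - s) / d < real N0" using reals_Archimedean2 by blast
  show "\<exists>no. \<forall>n\<ge>no. norm ((\<Sum>j<n. (g (s + real (Suc j) * ((t - s) / real n)) - g (s + real j * ((t - s) / real n)))
                 * X (s + real (Suc j) * ((t - s) / real n))) - integral {s..t} (\<lambda>r. g' r * X r)) < e"
  proof (intro exI[of _ "Suc N0"] allI impI)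
    fix n assume n: "Suc N0 \<le> n"
    then have npos: "0 < real n" by simp
    define r where "r j = s + real j * ((t - s) / real n)" for j
    have mono: "r j \<le> r (Suc j)" for j
    proof -
      have "real j * ((t - s) / real n) \<le> real (Suc j) * ((t - s) / real n)"
        using st npos by (intro mult_right_mono) (auto simp: divide_nonneg_pos)
      then show ?thesis by (simp add: r_def)
    qed
    have r0: "r 0 = s" and rn: "r n = t" using npos by (simp_all add: r_def)
    have step: "r (Suc j) - r j = (t - s) / real n" for j by (simp add: r_def algebra_simps add_divide_distrib[symmetric])
    have stepd: "(t - s) / real n < d"
    proof -
      have "(t - s) / d < real n" using N0 n by simp
      then show ?thesis using d npos by (simp add: field_simps)
    qed
    have rin: "r j \<in> {s..t}" if "j \<le> n" for j
    proof -
      have "real j * ((t - s) / real n) \<le> real n * ((t - s) / real n)"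
        using that st npos by (intro mult_right_mono) (auto simp: divide_nonneg_pos)
      then show ?thesis using st npos by (auto simp: r_def divide_nonneg_pos)
    qed
    have cf: "continuous_on {s..t} (\<lambda>r. g' r * X r)"
      using cX cg' continuous_on_subset by (intro continuous_intros) auto
    have I: "integral {s..t} (\<lambda>r. g' r * X r) = (\<Sum>j<n. integral {r j..r (Suc j)} (\<lambda>r. g' r * X r))"
      using integral_grid[where r=r and f="\<lambda>r. g' r * X r" and m=n, OF mono] cf r0 rn by simp
    have sub: "{r j..r (Suc j)} \<subseteq> {s..t}" if "j < n" for j
      using rin[of j] rin[of "Suc j"] that by auto
    have each: "\<bar>(g (r (Suc j)) - g (r j)) * X (r (Suc j)) - integral {r j..r (Suc j)} (\<lambda>r. g' r * X r)\<bar>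
        \<le> B * e' * ((t - s) / real n)" if j: "j < n" for j
    proof -
      have ftc: "(g' has_integral (g (r (Suc j)) - g (r j))) {r j..r (Suc j)}"
        using mono[of j] dg
        by (intro fundamental_theorem_of_calculus)
           (auto simp: has_real_derivative_iff_has_vector_derivative[symmetric] intro: has_field_derivative_at_within)
      have i1: "integral {r j..r (Suc j)} (\<lambda>r'. g' r' * X (r (Suc j))) = (g (r (Suc j)) - g (r j)) * X (r (Suc j))"
        by (rule integral_unique[OF has_integral_mult_left[OF ftc]])
      have i2: "integral {r j..r (Suc j)} (\<lambda>r'. g' r' * X (r (Suc j))) - integral {r j..r (Suc j)} (\<lambda>r. g' r * X r)
          = integral {r j..r (Suc j)} (\<lambda>r'. g' r' * (X (r (Suc j)) - X r'))"
      proof -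
        have c1: "continuous_on {r j..r (Suc j)} (\<lambda>r'. g' r' * X (r (Suc j)))"
          using cg' continuous_on_subset by (intro continuous_intros) auto
        have c2: "continuous_on {r j..r (Suc j)} (\<lambda>r. g' r * X r)"
          using cf sub[OF j] continuous_on_subset by blast
        show ?thesis
          using integral_diff[OF integrable_continuous_interval[OF c1] integrable_continuous_interval[OF c2]]
          by (simp add: algebra_simps)
      qed
      have i3: "norm (integral {r j..r (Suc j)} (\<lambda>r'. g' r' * (X (r (Suc j)) - X r'))) \<le> (B * e') * (r (Suc j) - r j)"
      proof (rule integral_bound[OF mono])
        show "continuous_on {r j..r (Suc j)} (\<lambda>r'. g' r' * (X (r (Suc j)) - X r'))"
          using cg' cX sub[OF j] continuous_on_subset by (intro continuous_intros) auto
        fix x assume x: "x \<in> {r j..r (Suc j)}"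
        have xin: "x \<in> {s..t}" using x sub[OF j] by auto
        have "dist (X (r (Suc j))) (X x) < e'"
          using dX[OF xin rin[of "Suc j"]] x stepd step[of j] j by (auto simp: dist_real_def)
        then have "\<bar>X (r (Suc j)) - X x\<bar> \<le> e'" by (simp add: dist_real_def)
        then show "norm (g' x * (X (r (Suc j)) - X x)) \<le> B * e'"
          using B[OF xin] by (simp add: abs_mult mult_mono B0)
      qed
      have i4: "(g (r (Suc j)) - g (r j)) * X (r (Suc j)) - integral {r j..r (Suc j)} (\<lambda>r. g' r * X r)
          = integral {r j..r (Suc j)} (\<lambda>r'. g' r' * (X (r (Suc j)) - X r'))"
        using i2 unfolding i1 .
      show ?thesis unfolding i4 using i3 unfolding step[of j] real_norm_def .
    qed
    have "\<bar>(\<Sum>j<n. (g (r (Suc j)) - g (r j)) * X (r (Suc j))) - integral {s..t} (\<lambda>r. g' r * X r)\<bar>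
        = \<bar>\<Sum>j<n. ((g (r (Suc j)) - g (r j)) * X (r (Suc j)) - integral {r j..r (Suc j)} (\<lambda>r. g' r * X r))\<bar>"
      unfolding I by (simp add: sum_subtractf)
    also have "\<dots> \<le> (\<Sum>j<n. \<bar>(g (r (Suc j)) - g (r j)) * X (r (Suc j)) - integral {r j..r (Suc j)} (\<lambda>r. g' r * X r)\<bar>)"
      by (rule sum_abs)
    also have "\<dots> \<le> (\<Sum>j<n. B * e' * ((t - s) / real n))"
      using each by (intro sum_mono) auto
    also have "\<dots> = B * e' * (t - s)" using npos by simp
    also have "\<dots> < e"
    proof -
      have "B * e' * (t - s) = e * (B * (t - s)) / ((B + 1) * (t - s + 1))" by (simp add: e'_def)
      also have "\<dots> < e"
      proof -
        have den: "0 < (B + 1) * (t - s + 1)" using B0 st by simp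
        have "B * (t - s) < (B + 1) * (t - s + 1)" using B0 st by (simp add: algebra_simps)
        then have "e * (B * (t - s)) < e * ((B + 1) * (t - s + 1))" using e by simp
        then show ?thesis using den by (simp add: pos_divide_less_eq)
      qed
      finally show ?thesis .
    qed
    finally show "norm ((\<Sum>j<n. (g (s + real (Suc j) * ((t - s) / real n)) - g (s + real j * ((t - s) / real n)))
                 * X (s + real (Suc j) * ((t - s) / real n))) - integral {s..t} (\<lambda>r. g' r * X r)) < e"
      by (simp add: r_def)
  qed
qed

lemma RS_conv:
  fixes g g' X :: "real \<Rightarrow> real"
  assumes st: "s < t" and cX: "continuous_on {s..t} X" and cg': "continuous_on UNIV g'"
    and dg: "\<And>x. (g has_real_derivative g' x) (at x)"
  shows "(\<lambda>n. RSsum g s t n X) \<longlonglongrightarrow> g t * X t - g s * X s - integral {s..t} (\<lambda>r. g' r * X r)"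
proof (rule Lim_transform_eventually)
  show "(\<lambda>n. g t * X t - g s * X s - (\<Sum>j<n. (g (s + real (Suc j) * ((t - s) / real n)) - g (s + real j * ((t - s) / real n)))
                 * X (s + real (Suc j) * ((t - s) / real n))))
     \<longlonglongrightarrow> g t * X t - g s * X s - integral {s..t} (\<lambda>r. g' r * X r)"
    by (intro tendsto_diff tendsto_const riemann_conv[OF assms])
  show "\<forall>\<^sub>F n in sequentially. g t * X t - g s * X s - (\<Sum>j<n. (g (s + real (Suc j) * ((t - s) / real n)) - g (s + real j * ((t - s) / real n)))
                 * X (s + real (Suc j) * ((t - s) / real n))) = RSsum g s t n X"
  proof (rule eventually_sequentiallyI[of 1])
    fix n :: nat assume n: "1 \<le> n"
    show "g t * X t - g s * X s - (\<Sum>j<n. (g (s + real (Suc j) * ((t - s) / real n)) - g (s + real j * ((t - s) / real n)))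
                 * X (s + real (Suc j) * ((t - s) / real n))) = RSsum g s t n X"
      unfolding RSsum_def
      using sum_by_parts[of "\<lambda>j. g (s + real j * ((t - s) / real n))" "\<lambda>j. X (s + real j * ((t - s) / real n))" n] n
      by simp
  qed
qed



lemma comp_bound:
  fixes X :: "real \<Rightarrow> 'w \<Rightarrow> real" and g g' :: "real \<Rightarrow> real"
  assumes P: "prob_space M" and fbm: "is_fbm M H X" and H: "0 < H" "H < 1/2"
    and s: "0 \<le> s" and st: "s < t"
    and dg: "\<And>x. (g has_real_derivative g' x) (at x)" and cg': "continuous_on UNIV g'"
    and gG: "\<And>x. s \<le> x \<Longrightarrow> x \<le> t \<Longrightarrow> \<bar>g x\<bar> \<le> G"
    and gL: "\<And>x y. s \<le> x \<Longrightarrow> x \<le> t \<Longrightarrow> s \<le> y \<Longrightarrow> y \<le> t \<Longrightarrow> \<bar>g x - g y\<bar> \<le> L * \<bar>x - y\<bar>"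
    and N: "1 \<le> N"
  shows "(\<lambda>\<omega>. path_int g X s t \<omega>) \<in> borel_measurable M"
    "(\<integral>\<^sup>+ \<omega>. ennreal ((path_int g X s t \<omega>)^2) \<partial>M)
       \<le> ennreal (2 * real N * ((t - s) / real N) powr (2*H) * (G + L * ((t - s) / real N))^2)"
proof -
  have CG: "centered_gaussian_family M X {0..} (fbm_cov H)"
    and cont: "\<And>\<omega>. \<omega> \<in> space M \<Longrightarrow> continuous_on {0..} (\<lambda>t. X t \<omega>)"
    using fbm unfolding is_fbm_def by auto
  have psd: "\<And>L. fin_comb L \<Longrightarrow> 0 \<le> QF (fbm_cov H) L"
    using gauss_comb(1)[OF P CG] by blast
  define h where "h = (t - s) / real N"
  have h: "0 < h" using st N by (simp add: h_def)
  have tt: "s + real N * h = t" using N by (simp add: h_def)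
  have gG': "\<And>x. s \<le> x \<Longrightarrow> x \<le> s + real N * h \<Longrightarrow> \<bar>g x\<bar> \<le> G" using gG tt by auto
  have gL': "\<And>x y. s \<le> x \<Longrightarrow> x \<le> s + real N * h \<Longrightarrow> s \<le> y \<Longrightarrow> y \<le> s + real N * h
              \<Longrightarrow> \<bar>g x - g y\<bar> \<le> L * \<bar>x - y\<bar>" using gL tt by auto
  note bb = block_bound[OF H psd s h N _ gG' gL', unfolded tt]
  define Y where "Y k \<omega> = RSsum g s t (N * Suc k) (\<lambda>u. X u \<omega>)" for k \<omega>
  have fc: "fin_comb (RSsum g s t (N * Suc k))" for k using bb(1)[of "Suc k"] by simp
  have Ym: "Y k \<in> borel_measurable M" for k
    unfolding Y_def using gauss_comb(2)[OF P CG fc[of k]] .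
  have Yint: "(\<integral>\<^sup>+ \<omega>. ennreal ((Y k \<omega>)^2) \<partial>M) \<le> ennreal (2 * real N * h powr (2*H) * (G + L * h)^2)" for k
  proof -
    have "(\<integral>\<^sup>+ \<omega>. ennreal ((Y k \<omega>)^2) \<partial>M) \<le> ennreal (QF (fbm_cov H) (RSsum g s t (N * Suc k)))"
      unfolding Y_def by (rule gauss_comb(3)[OF P CG fc[of k]])
    also have "\<dots> \<le> ennreal (2 * real N * h powr (2*H) * (G + L * h)^2)"
      using bb(2)[of "Suc k"] by (intro ennreal_leI) simp
    finally show ?thesis .
  qed
  have sm: "strict_mono (\<lambda>k. N * Suc k)"
    using N by (intro strict_monoI) simp
  have deriv_eq: "deriv g r = g' r" for r using dg by (rule DERIV_imp_deriv)
  have lim: "(\<lambda>k. Y k \<omega>) \<longlonglongrightarrow> path_int g X s t \<omega>" if \<omega>: "\<omega> \<in> space M" for \<omega>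
  proof -
    have cX: "continuous_on {s..t} (\<lambda>u. X u \<omega>)"
      using cont[OF \<omega>] s by (elim continuous_on_subset) auto
    have "(\<lambda>n. RSsum g s t n (\<lambda>u. X u \<omega>)) \<longlonglongrightarrow> g t * X t \<omega> - g s * X s \<omega> - integral {s..t} (\<lambda>r. g' r * X r \<omega>)"
      by (rule RS_conv[OF st cX cg' dg])
    from LIMSEQ_subseq_LIMSEQ[OF this sm]
    show ?thesis unfolding path_int_def deriv_eq Y_def by (simp add: o_def)
  qed
  show meas: "(\<lambda>\<omega>. path_int g X s t \<omega>) \<in> borel_measurable M"
    by (rule borel_measurable_LIMSEQ_real[OF lim Ym])
  have "(\<integral>\<^sup>+ \<omega>. ennreal ((path_int g X s t \<omega>)^2) \<partial>M) = (\<integral>\<^sup>+ \<omega>. liminf (\<lambda>k. ennreal ((Y k \<omega>)^2)) \<partial>M)"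
  proof (rule nn_integral_cong)
    fix \<omega> assume "\<omega> \<in> space M"
    then have "(\<lambda>k. ennreal ((Y k \<omega>)^2)) \<longlonglongrightarrow> ennreal ((path_int g X s t \<omega>)^2)"
      by (intro tendsto_ennrealI tendsto_power lim)
    then show "ennreal ((path_int g X s t \<omega>)^2) = liminf (\<lambda>k. ennreal ((Y k \<omega>)^2))"
      by (intro lim_imp_Liminf[symmetric] trivial_limit_sequentially)
  qed
  also have "\<dots> \<le> liminf (\<lambda>k. \<integral>\<^sup>+ \<omega>. ennreal ((Y k \<omega>)^2) \<partial>M)"
    by (rule nn_integral_liminf) (use Ym in measurable)
  also have "\<dots> \<le> ennreal (2 * real N * h powr (2*H) * (G + L * h)^2)"
    by (rule order_trans[OF Liminf_le_Limsup[OF trivial_limit_sequentially] Limsup_bounded])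
       (use Yint in auto)
  finally show "(\<integral>\<^sup>+ \<omega>. ennreal ((path_int g X s t \<omega>)^2) \<partial>M)
       \<le> ennreal (2 * real N * ((t - s) / real N) powr (2*H) * (G + L * ((t - s) / real N))^2)"
    unfolding h_def .
qed



lemma sharp_real_small:
  fixes p \<mu> \<mu>0 \<epsilon> a T :: real
  assumes p: "0 < p" "p < 1" and mu: "0 < \<mu>0" "\<mu>0 \<le> \<mu>" and e: "0 < \<epsilon>" "\<mu> * \<epsilon> \<le> 1"
    and T: "0 \<le> T" and a: "0 \<le> a"
  shows "2 * real (1::nat) * (\<epsilon> / real (1::nat)) powr p * (a + a * \<mu> * (\<epsilon> / real (1::nat)))^2
         \<le> 8 * a^2 * (2 * T + 1 / \<mu>0) * \<mu> powr (1 - p)"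
proof -
  have mpos: "0 < \<mu>" using mu by simp
  have "a * \<mu> * \<epsilon> \<le> a" using a e mult_left_mono[of "\<mu> * \<epsilon>" 1 a] by (simp add: mult.assoc)
  then have s1: "(a + a * \<mu> * \<epsilon>)^2 \<le> (2 * a)^2"
    using a e mpos by (intro power_mono) auto
  have el: "\<epsilon> \<le> 1 / \<mu>" using e mpos by (simp add: field_simps)
  have s2: "\<epsilon> powr p \<le> (1 / \<mu>) powr p" using e el p by (intro powr_mono2) auto
  have s3: "(1 / \<mu>) powr p = \<mu> powr (1 - p) / \<mu>"
    using mpos by (simp add: powr_diff powr_divide)
  have s4: "\<mu> powr (1 - p) / \<mu> \<le> (2 * T + 1 / \<mu>0) * \<mu> powr (1 - p)"
  proof -
    have "1 / \<mu> \<le> 2 * T + 1 / \<mu>0" using mu T by (smt (verit) frac_le zero_le_one)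
    then have "\<mu> powr (1 - p) * (1 / \<mu>) \<le> \<mu> powr (1 - p) * (2 * T + 1 / \<mu>0)"
      by (intro mult_left_mono) auto
    then show ?thesis by (simp add: mult.commute)
  qed
  have "2 * real (1::nat) * (\<epsilon> / real (1::nat)) powr p * (a + a * \<mu> * (\<epsilon> / real (1::nat)))^2
      = 2 * \<epsilon> powr p * (a + a * \<mu> * \<epsilon>)^2" by simp
  also have "\<dots> \<le> 2 * (\<mu> powr (1 - p) / \<mu>) * (2 * a)^2"
    using s1 s2 s3 mpos by (intro mult_mono) auto
  also have "\<dots> \<le> 2 * ((2 * T + 1 / \<mu>0) * \<mu> powr (1 - p)) * (2 * a)^2"
    using s4 mpos T mu by (intro mult_mono) auto
  also have "\<dots> = 8 * a^2 * (2 * T + 1 / \<mu>0) * \<mu> powr (1 - p)"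
    by (simp add: power2_eq_square)
  finally show ?thesis .
qed

lemma sharp_real_large:
  fixes p \<mu> \<mu>0 \<epsilon> a T :: real
  assumes p: "0 < p" "p < 1" and mu: "0 < \<mu>0" "\<mu>0 \<le> \<mu>" and e: "0 < \<epsilon>" "1 < \<mu> * \<epsilon>" "\<epsilon> \<le> T"
    and a: "0 \<le> a"
  defines "N \<equiv> nat \<lceil>\<mu> * \<epsilon>\<rceil>"
  shows "1 \<le> N" "2 * real N * (\<epsilon> / real N) powr p * (a + a * \<mu> * (\<epsilon> / real N))^2
         \<le> 8 * a^2 * (2 * T + 1 / \<mu>0) * \<mu> powr (1 - p)"
proof -
  have mpos: "0 < \<mu>" using mu by simp
  have N1: "\<mu> * \<epsilon> \<le> real N" unfolding N_def by linarith
  have N2: "real N \<le> 2 * (\<mu> * \<epsilon>)" unfolding N_def using e by linarith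
  show "1 \<le> N" using N1 e by linarith
  have Npos: "0 < real N" using N1 e by linarith
  define h where "h = \<epsilon> / real N"
  have hpos: "0 < h" using e Npos by (simp add: h_def)
  have h1: "h \<le> 1 / \<mu>"
  proof -
    have "\<epsilon> \<le> real N / \<mu>" using N1 mpos by (simp add: field_simps)
    then show ?thesis using Npos mpos by (simp add: h_def field_simps)
  qed
  have h2: "1 / (2 * \<mu>) \<le> h"
  proof -
    have "real N / (2 * \<mu>) \<le> \<epsilon>" using N2 mpos by (simp add: field_simps)
    then show ?thesis using Npos mpos by (simp add: h_def field_simps)
  qed
  have "a * \<mu> * h \<le> a" using a h1 mpos mult_left_mono[of "\<mu> * h" 1 a]
    by (simp add: mult.assoc field_simps)
  then have s1: "(a + a * \<mu> * h)^2 \<le> (2 * a)^2"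
    using a hpos mpos by (intro power_mono) auto
  have hp: "h powr p = h * h powr (p - 1)"
    using hpos by (simp add: powr_diff)
  have s2: "h powr (p - 1) \<le> (1 / (2 * \<mu>)) powr (p - 1)"
    using h2 p mpos by (intro powr_mono2') auto
  have s3: "(1 / (2 * \<mu>)) powr (p - 1) = 2 powr (1 - p) * \<mu> powr (1 - p)"
    using mpos by (simp add: powr_divide powr_mult powr_diff)
  have s4: "2 powr (1 - p) \<le> (2::real)"
    using powr_mono[of "1 - p" 1 2] p by simp
  have T_nonneg: "0 \<le> T" using e by simp
  have NH: "real N * h = \<epsilon>" using Npos by (simp add: h_def)
  have "real N * h powr p = \<epsilon> * h powr (p - 1)" using NH hp by (simp add: mult.assoc[symmetric])
  also have "\<dots> \<le> T * (2 * \<mu> powr (1 - p))"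
    using e s2 s3 s4 mult_right_mono[OF s4, of "\<mu> powr (1 - p)"]
    by (intro mult_mono) auto
  finally have NHp: "real N * h powr p \<le> T * (2 * \<mu> powr (1 - p))" .
  have "2 * real N * h powr p * (a + a * \<mu> * h)^2 \<le> 2 * (T * (2 * \<mu> powr (1 - p))) * (2 * a)^2"
  proof -
    have "real N * h powr p * (a + a * \<mu> * h)^2 \<le> (T * (2 * \<mu> powr (1 - p))) * (2 * a)^2"
      using NHp s1 Npos T_nonneg mpos by (intro mult_mono[OF NHp s1]) auto
    then show ?thesis by (simp add: ac_simps)
  qed
  also have "\<dots> \<le> 8 * a^2 * (2 * T + 1 / \<mu>0) * \<mu> powr (1 - p)"
  proof -
    have "2 * T \<le> 2 * T + 1 / \<mu>0" using mu by simp
    then have "8 * a^2 * (2 * T) * \<mu> powr (1 - p) \<le> 8 * a^2 * (2 * T + 1 / \<mu>0) * \<mu> powr (1 - p)"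
      by (intro mult_right_mono mult_left_mono) auto
    then show ?thesis by (simp add: power2_eq_square algebra_simps)
  qed
  finally show "2 * real N * (\<epsilon> / real N) powr p * (a + a * \<mu> * (\<epsilon> / real N))^2
         \<le> 8 * a^2 * (2 * T + 1 / \<mu>0) * \<mu> powr (1 - p)" unfolding h_def .
qed



lemma sin_lip: "\<bar>sin x - sin y\<bar> \<le> \<bar>x - y\<bar>" for x y :: real
proof -
  have a1: "\<bar>sin ((x - y) / 2)\<bar> \<le> \<bar>x - y\<bar> / 2" using abs_sin_x_le_abs_x[of "(x - y) / 2"] by simp
  have "\<bar>sin x - sin y\<bar> = 2 * \<bar>sin ((x - y) / 2)\<bar> * \<bar>cos ((x + y) / 2)\<bar>"
    by (simp add: sin_diff_sin abs_mult)
  also have "\<dots> \<le> 2 * (\<bar>x - y\<bar> / 2) * 1"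
    using a1 by (intro mult_mono) auto
  finally show ?thesis by simp
qed

lemma cos_lip: "\<bar>cos x - cos y\<bar> \<le> \<bar>x - y\<bar>" for x y :: real
proof -
  have a1: "\<bar>sin ((y - x) / 2)\<bar> \<le> \<bar>x - y\<bar> / 2" using abs_sin_x_le_abs_x[of "(y - x) / 2"] by (simp add: abs_minus_commute)
  have "\<bar>cos x - cos y\<bar> = 2 * \<bar>sin ((x + y) / 2)\<bar> * \<bar>sin ((y - x) / 2)\<bar>"
    by (simp add: cos_diff_cos abs_mult)
  also have "\<dots> \<le> 2 * 1 * (\<bar>x - y\<bar> / 2)"
    using a1 by (intro mult_mono) auto
  finally show ?thesis by simp
qed

lemma comp_gen:
  fixes X :: "real \<Rightarrow> 'w \<Rightarrow> real" and w w' :: "real \<Rightarrow> real"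
  assumes P: "prob_space M" and fbm: "is_fbm M H X" and H: "0 < H" "H < 1/2"
    and s: "0 \<le> s" and st: "s < t" and tT: "t \<le> T"
    and mu: "0 < \<mu>0" "\<mu>0 \<le> \<mu>" and a: "0 \<le> a"
    and w1: "\<And>x. \<bar>w x\<bar> \<le> 1" and wl: "\<And>x y. \<bar>w x - w y\<bar> \<le> \<bar>x - y\<bar>"
    and dw: "\<And>x. (w has_real_derivative w' x) (at x)" and cw': "continuous_on UNIV w'"
  shows "(\<lambda>\<omega>. path_int (\<lambda>r. a * w (\<mu> * (t - r))) X s t \<omega>) \<in> borel_measurable M"
    "(\<integral>\<^sup>+ \<omega>. ennreal ((path_int (\<lambda>r. a * w (\<mu> * (t - r))) X s t \<omega>)^2) \<partial>M)
       \<le> ennreal (8 * a^2 * (2 * T + 1 / \<mu>0) * \<mu> powr (1 - 2*H))"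
    "(\<And>x. \<bar>w x\<bar> \<le> \<bar>x\<bar>) \<Longrightarrow> \<mu> * (t - s) \<le> 1 \<Longrightarrow>
     (\<integral>\<^sup>+ \<omega>. ennreal ((path_int (\<lambda>r. a * w (\<mu> * (t - r))) X s t \<omega>)^2) \<partial>M)
       \<le> ennreal (8 * a^2 * \<mu>^2 * (t - s)^2 * (t - s) powr (2*H))"
proof -
  have mpos: "0 < \<mu>" using mu by simp
  define g where "g r = a * w (\<mu> * (t - r))" for r
  define g' where "g' r = a * (w' (\<mu> * (t - r)) * (0 - \<mu>))" for r
  have dg: "(g has_real_derivative g' x) (at x)" for x
    unfolding g_def g'_def
    by (intro DERIV_cmult DERIV_chain2[OF dw] derivative_eq_intros) auto
  have cg': "continuous_on UNIV g'"
    unfolding g'_def using cw'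
    by (intro continuous_intros continuous_on_compose2[OF cw']) auto
  have gL: "\<bar>g x - g y\<bar> \<le> (a * \<mu>) * \<bar>x - y\<bar>" for x y
  proof -
    have "\<bar>g x - g y\<bar> = a * \<bar>w (\<mu> * (t - x)) - w (\<mu> * (t - y))\<bar>"
      unfolding g_def using a by (simp add: abs_mult right_diff_distrib[symmetric])
    also have "\<dots> \<le> a * \<bar>\<mu> * (t - x) - \<mu> * (t - y)\<bar>" using a wl by (intro mult_left_mono) auto
    also have "\<bar>\<mu> * (t - x) - \<mu> * (t - y)\<bar> = \<mu> * \<bar>x - y\<bar>"
      using mpos by (simp add: abs_mult right_diff_distrib[symmetric] abs_minus_commute)
    finally show ?thesis by (simp add: mult.assoc)
  qed
  have gG: "\<bar>g x\<bar> \<le> a" for x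
    unfolding g_def using a w1[of "\<mu> * (t - x)"] by (simp add: abs_mult mult_left_le)
  note cb = comp_bound[OF P fbm H s st dg cg', where L="a * \<mu>"]
  show "(\<lambda>\<omega>. path_int (\<lambda>r. a * w (\<mu> * (t - r))) X s t \<omega>) \<in> borel_measurable M"
    using cb(1)[of a 1] gG gL unfolding g_def by auto
  have e: "0 < t - s" using st by simp
  show "(\<integral>\<^sup>+ \<omega>. ennreal ((path_int (\<lambda>r. a * w (\<mu> * (t - r))) X s t \<omega>)^2) \<partial>M)
       \<le> ennreal (8 * a^2 * (2 * T + 1 / \<mu>0) * \<mu> powr (1 - 2*H))"
  proof (cases "\<mu> * (t - s) \<le> 1")
    case True
    have "(\<integral>\<^sup>+ \<omega>. ennreal ((path_int g X s t \<omega>)^2) \<partial>M)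
       \<le> ennreal (2 * real (1::nat) * ((t - s) / real (1::nat)) powr (2*H) * (a + a * \<mu> * ((t - s) / real (1::nat)))^2)"
      using cb(2)[of a 1] gG gL by auto
    also have "\<dots> \<le> ennreal (8 * a^2 * (2 * T + 1 / \<mu>0) * \<mu> powr (1 - 2*H))"
      using sharp_real_small[of "2*H" \<mu>0 \<mu> "t - s" T a] H mu e True s st tT a
      by (intro ennreal_leI) auto
    finally show ?thesis unfolding g_def .
  next
    case False
    define N where "N = nat \<lceil>\<mu> * (t - s)\<rceil>"
    note sl = sharp_real_large[of "2*H" \<mu>0 \<mu> "t - s" T a, folded N_def]
    have N: "1 \<le> N" using sl(1) H mu e False tT s a by auto
    have "(\<integral>\<^sup>+ \<omega>. ennreal ((path_int g X s t \<omega>)^2) \<partial>M)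
       \<le> ennreal (2 * real N * ((t - s) / real N) powr (2*H) * (a + a * \<mu> * ((t - s) / real N))^2)"
      using cb(2)[of a N] gG gL N by auto
    also have "\<dots> \<le> ennreal (8 * a^2 * (2 * T + 1 / \<mu>0) * \<mu> powr (1 - 2*H))"
      using sl(2) H mu e False s st tT a
      by (intro ennreal_leI) auto
    finally show ?thesis unfolding g_def .
  qed
  assume wx: "\<And>x. \<bar>w x\<bar> \<le> \<bar>x\<bar>" and small: "\<mu> * (t - s) \<le> 1"
  have gG2: "\<bar>g x\<bar> \<le> a * \<mu> * (t - s)" if "s \<le> x" "x \<le> t" for x
  proof -
    have "\<bar>g x\<bar> = a * \<bar>w (\<mu> * (t - x))\<bar>" unfolding g_def using a by (simp add: abs_mult)
    also have "\<dots> \<le> a * \<bar>\<mu> * (t - x)\<bar>" using a wx by (intro mult_left_mono) auto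
    also have "\<bar>\<mu> * (t - x)\<bar> \<le> \<mu> * (t - s)" using that mpos by (simp add: abs_mult)
    finally show ?thesis using a by (simp add: mult_left_mono mult.assoc)
  qed
  have "(\<integral>\<^sup>+ \<omega>. ennreal ((path_int g X s t \<omega>)^2) \<partial>M)
       \<le> ennreal (2 * real (1::nat) * ((t - s) / real (1::nat)) powr (2*H) * (a * \<mu> * (t - s) + a * \<mu> * ((t - s) / real (1::nat)))^2)"
    using cb(2)[of "a * \<mu> * (t - s)" 1] gG2 gL by auto
  also have "\<dots> = ennreal (8 * a^2 * \<mu>^2 * (t - s)^2 * (t - s) powr (2*H))"
    by (simp add: power2_eq_square algebra_simps)
  finally show "(\<integral>\<^sup>+ \<omega>. ennreal ((path_int (\<lambda>r. a * w (\<mu> * (t - r))) X s t \<omega>)^2) \<partial>M)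
       \<le> ennreal (8 * a^2 * \<mu>^2 * (t - s)^2 * (t - s) powr (2*H))" unfolding g_def .
qed



lemma E_norm2_bound:
  assumes meas: "\<And>i. (\<lambda>\<omega>. path_int (g i) (\<xi> i) s t \<omega>) \<in> borel_measurable M"
    and bnd: "\<And>i. (\<integral>\<^sup>+ \<omega>. ennreal ((path_int (g i) (\<xi> i) s t \<omega>)^2) \<partial>M) \<le> ennreal (b i)"
    and q: "\<And>i. 0 \<le> q i" and b: "\<And>i. 0 \<le> b i" and sb: "summable (\<lambda>i. q i * b i)"
  shows "E_norm2 M q \<xi> g s t \<le> ennreal (\<Sum>i. q i * b i)"
proof -
  have m2: "(\<lambda>\<omega>. ennreal (q i * (path_int (g i) (\<xi> i) s t \<omega>)^2)) \<in> borel_measurable M" for i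
    using meas[of i] by measurable
  have "E_norm2 M q \<xi> g s t = (\<Sum>i. \<integral>\<^sup>+ \<omega>. ennreal (q i * (path_int (g i) (\<xi> i) s t \<omega>)^2) \<partial>M)"
    unfolding E_norm2_def by (rule nn_integral_suminf[OF m2])
  also have "\<dots> \<le> (\<Sum>i. ennreal (q i * b i))"
  proof (intro suminf_le summableI)
    fix i
    have m3: "(\<lambda>\<omega>. ennreal ((path_int (g i) (\<xi> i) s t \<omega>)^2)) \<in> borel_measurable M"
      using meas[of i] by measurable
    have "(\<integral>\<^sup>+ \<omega>. ennreal (q i * (path_int (g i) (\<xi> i) s t \<omega>)^2) \<partial>M)
        = (\<integral>\<^sup>+ \<omega>. ennreal (q i) * ennreal ((path_int (g i) (\<xi> i) s t \<omega>)^2) \<partial>M)"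
      using q[of i] by (simp add: ennreal_mult)
    also have "\<dots> = ennreal (q i) * (\<integral>\<^sup>+ \<omega>. ennreal ((path_int (g i) (\<xi> i) s t \<omega>)^2) \<partial>M)"
      by (rule nn_integral_cmult[OF m3])
    also have "\<dots> \<le> ennreal (q i) * ennreal (b i)"
      by (intro mult_left_mono bnd) auto
    also have "\<dots> = ennreal (q i * b i)" using q[of i] b[of i] by (simp add: ennreal_mult)
    finally show "(\<integral>\<^sup>+ \<omega>. ennreal (q i * (path_int (g i) (\<xi> i) s t \<omega>)^2) \<partial>M) \<le> ennreal (q i * b i)" .
  qed
  also have "\<dots> = ennreal (\<Sum>i. q i * b i)"
    using q b sb by (intro suminf_ennreal2) auto
  finally show ?thesis .
qed

lemma E_norm2_zero: "E_norm2 M q \<xi> g t t = 0"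
  unfolding E_norm2_def path_int_def by simp

lemma inv_powr: "0 < (\<mu>::real) \<Longrightarrow> (1 / \<mu>) powr x = \<mu> powr (- x)"
  by (simp add: powr_divide powr_minus_divide)

lemma final_real_small:
  fixes p \<mu> \<mu>0 \<epsilon> \<beta> :: real
  assumes p: "0 < p" "p < 1" and mu: "0 < \<mu>0" "\<mu>0 \<le> \<mu>" and e: "0 < \<epsilon>" "\<mu> * \<epsilon> \<le> 1"
    and \<beta>: "0 < \<beta>"
  shows "\<epsilon>^2 * \<epsilon> powr p \<le> \<mu>0 powr (min \<beta> 2 - \<beta> - 1) * \<mu> powr (\<beta> - 1 - p) * \<epsilon> powr (min \<beta> 2)"
proof -
  define P where "P = min \<beta> 2"
  have P: "0 < P" "P \<le> 2" "P \<le> \<beta>" using \<beta> by (auto simp: P_def)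
  have mpos: "0 < \<mu>" using mu by simp
  have e1: "\<epsilon>^2 * \<epsilon> powr p = \<epsilon> powr P * \<epsilon> powr (2 + p - P)"
  proof -
    have a: "\<epsilon>^2 = \<epsilon> powr 2" using e by (simp add: powr_numeral)
    have b: "\<epsilon> powr P * \<epsilon> powr (2 + p - P) = \<epsilon> powr (P + (2 + p - P))" by (rule powr_add[symmetric])
    have c: "\<epsilon> powr 2 * \<epsilon> powr p = \<epsilon> powr (2 + p)" by (rule powr_add[symmetric])
    show ?thesis unfolding a b c by simp
  qed
  have el: "\<epsilon> \<le> 1 / \<mu>" using e mpos by (simp add: field_simps)
  have e2: "\<epsilon> powr (2 + p - P) \<le> (1 / \<mu>) powr (2 + p - P)"
    using e el p P by (intro powr_mono2) auto
  have e3: "(1 / \<mu>) powr (2 + p - P) = \<mu> powr (\<beta> - 1 - p) * \<mu> powr (P - \<beta> - 1)"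
  proof -
    have a: "(1 / \<mu>) powr (2 + p - P) = \<mu> powr (- (2 + p - P))" using mpos by (rule inv_powr)
    have b: "\<mu> powr (\<beta> - 1 - p) * \<mu> powr (P - \<beta> - 1) = \<mu> powr ((\<beta> - 1 - p) + (P - \<beta> - 1))" by (rule powr_add[symmetric])
    show ?thesis unfolding a b by (simp add: algebra_simps)
  qed
  have e4: "\<mu> powr (P - \<beta> - 1) \<le> \<mu>0 powr (P - \<beta> - 1)"
    using mu P by (intro powr_mono2') auto
  have e5: "\<epsilon> powr (2 + p - P) \<le> \<mu> powr (\<beta> - 1 - p) * \<mu>0 powr (P - \<beta> - 1)"
  proof -
    have "\<mu> powr (\<beta> - 1 - p) * \<mu> powr (P - \<beta> - 1) \<le> \<mu> powr (\<beta> - 1 - p) * \<mu>0 powr (P - \<beta> - 1)"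
      using e4 by (rule mult_left_mono) simp
    then show ?thesis using e2 e3 by linarith
  qed
  have "\<epsilon>^2 * \<epsilon> powr p \<le> \<epsilon> powr P * (\<mu> powr (\<beta> - 1 - p) * \<mu>0 powr (P - \<beta> - 1))"
    unfolding e1 using e5 by (rule mult_left_mono) simp
  then show ?thesis by (simp add: P_def ac_simps)
qed

lemma final_real_large:
  fixes p \<mu> \<mu>0 \<epsilon> \<beta> :: real
  assumes p: "0 < p" "p < 1" and mu: "0 < \<mu>0" "\<mu>0 \<le> \<mu>" and e: "0 < \<epsilon>" "1 < \<mu> * \<epsilon>"
    and \<beta>: "0 < \<beta>"
  shows "\<mu> powr (- 1 - p) \<le> \<mu>0 powr (min \<beta> 2 - \<beta>) * \<mu> powr (\<beta> - 1 - p) * \<epsilon> powr (min \<beta> 2)"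
proof -
  define P where "P = min \<beta> 2"
  have P: "0 < P" "P \<le> 2" "P \<le> \<beta>" using \<beta> by (auto simp: P_def)
  have mpos: "0 < \<mu>" using mu by simp
  have e1: "\<mu> powr (- 1 - p) = \<mu> powr (\<beta> - 1 - p) * \<mu> powr (P - \<beta>) * (1 / \<mu>) powr P"
  proof -
    have a: "(1 / \<mu>) powr P = \<mu> powr (- P)" using mpos by (rule inv_powr)
    have b: "\<mu> powr (\<beta> - 1 - p) * \<mu> powr (P - \<beta>) * \<mu> powr (- P) = \<mu> powr ((\<beta> - 1 - p) + (P - \<beta>) + (- P))" by (simp only: powr_add)
    show ?thesis unfolding a b by (simp add: algebra_simps)
  qed
  have el: "1 / \<mu> \<le> \<epsilon>" using e mpos by (simp add: field_simps)
  have e2: "(1 / \<mu>) powr P \<le> \<epsilon> powr P" using el P mpos by (intro powr_mono2) auto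
  have e4: "\<mu> powr (P - \<beta>) \<le> \<mu>0 powr (P - \<beta>)"
    using mu P by (intro powr_mono2') auto
  have "\<mu> powr (- 1 - p) \<le> \<mu> powr (\<beta> - 1 - p) * \<mu>0 powr (P - \<beta>) * \<epsilon> powr P"
    unfolding e1 using e2 e4 by (intro mult_mono) auto
  then show ?thesis by (simp add: P_def ac_simps)
qed



theorem proposition1:
  fixes \<alpha> H T \<rho> \<kappa> :: real
    and lam q :: "nat \<Rightarrow> real"
    and M :: "'w measure"
    and \<xi> :: "nat \<Rightarrow> real \<Rightarrow> 'w \<Rightarrow> real"
  assumes "0 < \<alpha>" "\<alpha> < 1" "0 < H" "H < 1/2" "0 < T"
    and "- \<alpha>/4 - H*\<alpha>/2 < \<rho>" "\<rho> < (\<alpha>+1)/4 - H*\<alpha>/2"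
    and lam_pos: "\<And>i. 0 < lam i" and lam_mono: "mono lam"
    and lam_inf: "filterlim lam at_top sequentially"
    and q_nonneg: "\<And>i. 0 \<le> q i"
    and trace: "summable (\<lambda>i. lam i powr (2*\<rho>) * q i)"
    and kappa: "\<kappa> = \<alpha>/2 + H*\<alpha> + 2*\<rho>" and "0 < \<kappa>"
    and P: "prob_space M"
    and fbm: "\<And>i. is_fbm M H (\<xi> i)"
    and indep: "prob_space.indep_vars M (\<lambda>_. Pi\<^sub>M {0..} (\<lambda>_. borel))
                  (\<lambda>i \<omega>. restrict (\<lambda>t. \<xi> i t \<omega>) {0..}) UNIV"
  shows "\<exists>C. \<forall>s t. 0 \<le> s \<and> s \<le> t \<and> t \<le> T \<longrightarrow>
     E_norm2 M q \<xi> (\<lambda>i r. lam i powr ((\<kappa> - \<alpha>)/2) * sin (lam i powr (\<alpha>/2) * (t - r))) s t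
   + E_norm2 M q \<xi> (\<lambda>i r. lam i powr ((\<kappa> - \<alpha>)/2) * cos (lam i powr (\<alpha>/2) * (t - r))) s t
       \<le> ennreal C
   \<and> E_norm2 M q \<xi> (\<lambda>i r. lam i powr (- \<alpha>/2) * sin (lam i powr (\<alpha>/2) * (t - r))) s t
       \<le> ennreal (C * (t - s) powr (min (2*\<kappa>/\<alpha>) 2))"
proof -
  note H = assms(3,4)
  have al: "0 < \<alpha>" using assms(1) .
  have T: "0 < T" using assms(5) .
  have p: "0 < 2*H" "2*H < 1" using H by auto
  have lam0: "0 < lam 0" by (rule lam_pos)
  have lam_ge: "lam 0 \<le> lam i" for i using lam_mono by (simp add: monoD)
  define \<mu>0 where "\<mu>0 = lam 0 powr (\<alpha>/2)"
  have mu0: "0 < \<mu>0" using lam0 by (simp add: \<mu>0_def)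
  have mu_ge: "\<mu>0 \<le> lam i powr (\<alpha>/2)" for i
    unfolding \<mu>0_def using lam0 lam_ge[of i] al by (intro powr_mono2) auto
  define K0 where "K0 = 2 * T + 1 / \<mu>0"
  have K0: "0 \<le> K0" using T mu0 by (simp add: K0_def)
  define S where "S = (\<Sum>i. lam i powr (2*\<rho>) * q i)"
  have S0: "0 \<le> S" unfolding S_def using trace q_nonneg by (intro suminf_nonneg) auto
  define \<beta> where "\<beta> = 2*\<kappa>/\<alpha>"
  have \<beta>: "0 < \<beta>" using assms(14) al by (simp add: \<beta>_def)
  define P where "P = min \<beta> 2"
  define c2 where "c2 = 8 * (\<mu>0 powr (P - \<beta> - 1) + K0 * \<mu>0 powr (P - \<beta>))"
  have c2: "0 \<le> c2" using K0 by (simp add: c2_def)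
  define C where "C = 16 * K0 * S + c2 * S"
  have sumq: "summable (\<lambda>i. q i * (c * lam i powr (2*\<rho>)))"
    and sumq_eq: "(\<Sum>i. q i * (c * lam i powr (2*\<rho>))) = c * S" for c
  proof -
    have "summable (\<lambda>i. c * (lam i powr (2*\<rho>) * q i))" using trace by (rule summable_mult)
    moreover have "(\<lambda>i. c * (lam i powr (2*\<rho>) * q i)) = (\<lambda>i. q i * (c * lam i powr (2*\<rho>)))"
      by (simp add: fun_eq_iff ac_simps)
    ultimately show "summable (\<lambda>i. q i * (c * lam i powr (2*\<rho>)))" by simp
    have "(\<Sum>i. c * (lam i powr (2*\<rho>) * q i)) = c * S" unfolding S_def using trace by (rule suminf_mult)
    then show "(\<Sum>i. q i * (c * lam i powr (2*\<rho>))) = c * S"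
      by (simp add: ac_simps)
  qed
  have id1: "(lam i powr ((\<kappa> - \<alpha>)/2))^2 * (lam i powr (\<alpha>/2)) powr (1 - 2*H) = lam i powr (2*\<rho>)" for i
  proof -
    have "(lam i powr ((\<kappa> - \<alpha>)/2))^2 * (lam i powr (\<alpha>/2)) powr (1 - 2*H)
        = lam i powr ((\<kappa> - \<alpha>)/2) * lam i powr ((\<kappa> - \<alpha>)/2) * lam i powr (\<alpha>/2 * (1 - 2*H))"
      by (simp add: power2_eq_square powr_powr)
    also have "\<dots> = lam i powr ((\<kappa> - \<alpha>)/2 + (\<kappa> - \<alpha>)/2 + \<alpha>/2 * (1 - 2*H))"
      by (simp only: powr_add)
    also have "(\<kappa> - \<alpha>)/2 + (\<kappa> - \<alpha>)/2 + \<alpha>/2 * (1 - 2*H) = 2*\<rho>"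
      using kappa by (simp add: algebra_simps)
    finally show ?thesis .
  qed
  have id2: "(lam i powr (\<alpha>/2)) powr (\<beta> - 1 - 2*H) = lam i powr (2*\<rho>)" for i
  proof -
    have "(lam i powr (\<alpha>/2)) powr (\<beta> - 1 - 2*H) = lam i powr (\<alpha>/2 * (\<beta> - 1 - 2*H))"
      by (simp add: powr_powr)
    also have "\<alpha>/2 * (\<beta> - 1 - 2*H) = 2*\<rho>"
      using kappa al by (simp add: \<beta>_def field_simps)
    finally show ?thesis .
  qed
  have id3: "lam i powr (- \<alpha>/2) = 1 / lam i powr (\<alpha>/2)" for i
    using lam_pos[of i] by (simp add: powr_minus_divide[symmetric])
  have sinprops: "\<bar>sin x\<bar> \<le> 1" "(sin has_real_derivative cos x) (at x)" for x :: real
    by (auto intro: DERIV_sin)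
  have cosprops: "\<bar>cos x\<bar> \<le> 1" "(cos has_real_derivative - sin x) (at x)" for x :: real
    by (auto intro: DERIV_cos)
  have ccos: "continuous_on UNIV (cos :: real \<Rightarrow> real)" by (intro continuous_intros)
  have msin: "continuous_on UNIV (\<lambda>x::real. - sin x)" by (intro continuous_intros)
  show ?thesis
  proof (intro exI[of _ C] allI impI)
    fix s t assume st: "0 \<le> s \<and> s \<le> t \<and> t \<le> T"
    show "E_norm2 M q \<xi> (\<lambda>i r. lam i powr ((\<kappa> - \<alpha>)/2) * sin (lam i powr (\<alpha>/2) * (t - r))) s t
        + E_norm2 M q \<xi> (\<lambda>i r. lam i powr ((\<kappa> - \<alpha>)/2) * cos (lam i powr (\<alpha>/2) * (t - r))) s t
          \<le> ennreal C
      \<and> E_norm2 M q \<xi> (\<lambda>i r. lam i powr (- \<alpha>/2) * sin (lam i powr (\<alpha>/2) * (t - r))) s t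
          \<le> ennreal (C * (t - s) powr (min (2*\<kappa>/\<alpha>) 2))"
    proof (cases "s = t")
      case True
      then show ?thesis by (simp add: E_norm2_zero)
    next
      case False
      then have s: "0 \<le> s" and st': "s < t" and tT: "t \<le> T" using st by auto
      have e: "0 < t - s" using st' by simp
      note cg = comp_gen[OF P fbm H s st' tT mu0 mu_ge]
      have b1: "E_norm2 M q \<xi> (\<lambda>i r. lam i powr ((\<kappa> - \<alpha>)/2) * w (lam i powr (\<alpha>/2) * (t - r))) s t
          \<le> ennreal (8 * K0 * S)"
        if w1: "\<And>x. \<bar>w x\<bar> \<le> 1" and wl: "\<And>x y. \<bar>w x - w y\<bar> \<le> \<bar>x - y\<bar>"
          and dw: "\<And>x. (w has_real_derivative w' x) (at x)" and cw': "continuous_on UNIV w'" for w w'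
      proof -
        have "E_norm2 M q \<xi> (\<lambda>i r. lam i powr ((\<kappa> - \<alpha>)/2) * w (lam i powr (\<alpha>/2) * (t - r))) s t
            \<le> ennreal (\<Sum>i. q i * ((8 * K0) * lam i powr (2*\<rho>)))"
        proof (rule E_norm2_bound)
          fix i
          show "(\<lambda>\<omega>. path_int (\<lambda>r. lam i powr ((\<kappa> - \<alpha>)/2) * w (lam i powr (\<alpha>/2) * (t - r))) (\<xi> i) s t \<omega>) \<in> borel_measurable M"
            using comp_gen(1)[OF P fbm[of i] H s st' tT mu0 mu_ge[of i] _ w1 wl dw cw'] by simp
          have "(\<integral>\<^sup>+ \<omega>. ennreal ((path_int (\<lambda>r. lam i powr ((\<kappa> - \<alpha>)/2) * w (lam i powr (\<alpha>/2) * (t - r))) (\<xi> i) s t \<omega>)^2) \<partial>M)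
              \<le> ennreal (8 * (lam i powr ((\<kappa> - \<alpha>)/2))^2 * K0 * (lam i powr (\<alpha>/2)) powr (1 - 2*H))"
            using comp_gen(2)[OF P fbm[of i] H s st' tT mu0 mu_ge[of i] _ w1 wl dw cw'] by (simp add: K0_def)
          also have "8 * (lam i powr ((\<kappa> - \<alpha>)/2))^2 * K0 * (lam i powr (\<alpha>/2)) powr (1 - 2*H) = (8 * K0) * lam i powr (2*\<rho>)"
            using id1[of i] by (simp add: ac_simps)
          finally show "(\<integral>\<^sup>+ \<omega>. ennreal ((path_int (\<lambda>r. lam i powr ((\<kappa> - \<alpha>)/2) * w (lam i powr (\<alpha>/2) * (t - r))) (\<xi> i) s t \<omega>)^2) \<partial>M)
              \<le> ennreal ((8 * K0) * lam i powr (2*\<rho>))" .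
        qed (use q_nonneg K0 sumq in auto)
        also have "\<dots> = ennreal (8 * K0 * S)" using sumq_eq[of "8 * K0"] by simp
        finally show ?thesis .
      qed
      have bs: "E_norm2 M q \<xi> (\<lambda>i r. lam i powr ((\<kappa> - \<alpha>)/2) * sin (lam i powr (\<alpha>/2) * (t - r))) s t \<le> ennreal (8 * K0 * S)"
        by (rule b1[OF _ sin_lip DERIV_sin ccos]) simp
      have bc: "E_norm2 M q \<xi> (\<lambda>i r. lam i powr ((\<kappa> - \<alpha>)/2) * cos (lam i powr (\<alpha>/2) * (t - r))) s t \<le> ennreal (8 * K0 * S)"
        by (rule b1[OF _ cos_lip DERIV_cos msin]) simp
      have claim1: "E_norm2 M q \<xi> (\<lambda>i r. lam i powr ((\<kappa> - \<alpha>)/2) * sin (lam i powr (\<alpha>/2) * (t - r))) s t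
        + E_norm2 M q \<xi> (\<lambda>i r. lam i powr ((\<kappa> - \<alpha>)/2) * cos (lam i powr (\<alpha>/2) * (t - r))) s t
          \<le> ennreal C"
      proof -
        have "E_norm2 M q \<xi> (\<lambda>i r. lam i powr ((\<kappa> - \<alpha>)/2) * sin (lam i powr (\<alpha>/2) * (t - r))) s t
          + E_norm2 M q \<xi> (\<lambda>i r. lam i powr ((\<kappa> - \<alpha>)/2) * cos (lam i powr (\<alpha>/2) * (t - r))) s t
          \<le> ennreal (8 * K0 * S) + ennreal (8 * K0 * S)" by (rule add_mono[OF bs bc])
        also have "\<dots> = ennreal (16 * K0 * S)" using K0 S0 by (simp add: ennreal_plus[symmetric])
        also have "\<dots> \<le> ennreal C" using c2 S0 by (intro ennreal_leI) (simp add: C_def)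
        finally show ?thesis .
      qed
      have claim2: "E_norm2 M q \<xi> (\<lambda>i r. lam i powr (- \<alpha>/2) * sin (lam i powr (\<alpha>/2) * (t - r))) s t
          \<le> ennreal (C * (t - s) powr (min (2*\<kappa>/\<alpha>) 2))"
      proof -
        define E where "E = (t - s) powr P"
        have E0: "0 \<le> E" by (simp add: E_def)
        have "E_norm2 M q \<xi> (\<lambda>i r. lam i powr (- \<alpha>/2) * sin (lam i powr (\<alpha>/2) * (t - r))) s t
            \<le> ennreal (\<Sum>i. q i * ((c2 * E) * lam i powr (2*\<rho>)))"
        proof (rule E_norm2_bound)
          fix i
          define \<mu> where "\<mu> = lam i powr (\<alpha>/2)"
          have mpos: "0 < \<mu>" using lam_pos[of i] by (simp add: \<mu>_def)
          have a: "lam i powr (- \<alpha>/2) = 1 / \<mu>" unfolding \<mu>_def by (rule id3)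
          have a0: "0 \<le> lam i powr (- \<alpha>/2)" by simp
          note cgi = comp_gen[OF P fbm[of i] H s st' tT mu0 mu_ge[of i], where a="lam i powr (- \<alpha>/2)", folded \<mu>_def]
          show "(\<lambda>\<omega>. path_int (\<lambda>r. lam i powr (- \<alpha>/2) * sin (\<mu> * (t - r))) (\<xi> i) s t \<omega>) \<in> borel_measurable M"
            using cgi(1)[OF _ _ sin_lip DERIV_sin ccos] mu_ge[of i] by (simp add: \<mu>_def)
          have key: "(\<integral>\<^sup>+ \<omega>. ennreal ((path_int (\<lambda>r. lam i powr (- \<alpha>/2) * sin (\<mu> * (t - r))) (\<xi> i) s t \<omega>)^2) \<partial>M)
              \<le> ennreal ((c2 * E) * \<mu> powr (\<beta> - 1 - 2*H))"
          proof (cases "\<mu> * (t - s) \<le> 1")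
            case True
            have A: "(\<integral>\<^sup>+ \<omega>. ennreal ((path_int (\<lambda>r. lam i powr (- \<alpha>/2) * sin (\<mu> * (t - r))) (\<xi> i) s t \<omega>)^2) \<partial>M)
                \<le> ennreal (8 * (lam i powr (- \<alpha>/2))^2 * \<mu>^2 * (t - s)^2 * (t - s) powr (2*H))"
              using cgi(3)[OF _ _ sin_lip DERIV_sin ccos abs_sin_x_le_abs_x True] mu_ge[of i] by (simp add: \<mu>_def)
            have "8 * (lam i powr (- \<alpha>/2))^2 * \<mu>^2 * (t - s)^2 * (t - s) powr (2*H) = 8 * ((t - s)^2 * (t - s) powr (2*H))"
              unfolding a using mpos by (simp add: power2_eq_square field_simps)
            also have "\<dots> \<le> 8 * (\<mu>0 powr (P - \<beta> - 1) * \<mu> powr (\<beta> - 1 - 2*H) * E)"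
              using final_real_small[OF p mu0 mu_ge[of i, folded \<mu>_def] e True \<beta>]
              by (simp add: E_def P_def)
            also have "\<dots> \<le> (c2 * E) * \<mu> powr (\<beta> - 1 - 2*H)"
            proof -
              have "8 * \<mu>0 powr (P - \<beta> - 1) \<le> c2" using K0 by (simp add: c2_def)
              then have "8 * \<mu>0 powr (P - \<beta> - 1) * (E * \<mu> powr (\<beta> - 1 - 2*H)) \<le> c2 * (E * \<mu> powr (\<beta> - 1 - 2*H))"
                using E0 by (intro mult_right_mono) auto
              then show ?thesis by (simp add: ac_simps)
            qed
            finally show ?thesis by (rule order_trans[OF A ennreal_leI])
          next
            case False
            have A: "(\<integral>\<^sup>+ \<omega>. ennreal ((path_int (\<lambda>r. lam i powr (- \<alpha>/2) * sin (\<mu> * (t - r))) (\<xi> i) s t \<omega>)^2) \<partial>M)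
                \<le> ennreal (8 * (lam i powr (- \<alpha>/2))^2 * (2 * T + 1 / \<mu>0) * \<mu> powr (1 - 2*H))"
              using cgi(2)[OF _ _ sin_lip DERIV_sin ccos] mu_ge[of i] by (simp add: \<mu>_def)
            have "8 * (lam i powr (- \<alpha>/2))^2 * (2 * T + 1 / \<mu>0) * \<mu> powr (1 - 2*H) = 8 * K0 * \<mu> powr (- 1 - 2*H)"
            proof -
              have F: "(1 / \<mu>)^2 * \<mu> powr (1 - 2*H) = \<mu> powr (- 1 - 2*H)"
              proof -
                have "(1 / \<mu>)^2 = \<mu> powr (-2)" using mpos
                  by (simp add: inv_powr[symmetric] powr_numeral)
                moreover have "\<mu> powr (-2) * \<mu> powr (1 - 2*H) = \<mu> powr (-2 + (1 - 2*H))" by (rule powr_add[symmetric])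
                ultimately have "(1 / \<mu>)^2 * \<mu> powr (1 - 2*H) = \<mu> powr (-2 + (1 - 2*H))" by simp
                then show ?thesis by simp
              qed
              have r: "8 * (1 / \<mu>)^2 * K0 * \<mu> powr (1 - 2*H) = 8 * K0 * ((1 / \<mu>)^2 * \<mu> powr (1 - 2*H))"
                by (simp only: mult.assoc mult.left_commute)
              show ?thesis unfolding a K0_def[symmetric] r F by (rule refl)
            qed
            also have "\<dots> \<le> 8 * K0 * (\<mu>0 powr (P - \<beta>) * \<mu> powr (\<beta> - 1 - 2*H) * E)"
              using final_real_large[OF p mu0 mu_ge[of i, folded \<mu>_def] e _ \<beta>] False K0
              by (intro mult_left_mono) (auto simp: E_def P_def)
            also have "\<dots> \<le> (c2 * E) * \<mu> powr (\<beta> - 1 - 2*H)"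
            proof -
              have "8 * K0 * \<mu>0 powr (P - \<beta>) \<le> c2" by (simp add: c2_def)
              then have "8 * K0 * \<mu>0 powr (P - \<beta>) * (E * \<mu> powr (\<beta> - 1 - 2*H)) \<le> c2 * (E * \<mu> powr (\<beta> - 1 - 2*H))"
                using E0 by (intro mult_right_mono) auto
              then show ?thesis by (simp add: ac_simps)
            qed
            finally show ?thesis by (rule order_trans[OF A ennreal_leI])
          qed
          show "(\<integral>\<^sup>+ \<omega>. ennreal ((path_int (\<lambda>r. lam i powr (- \<alpha>/2) * sin (lam i powr (\<alpha>/2) * (t - r))) (\<xi> i) s t \<omega>)^2) \<partial>M)
              \<le> ennreal ((c2 * E) * lam i powr (2*\<rho>))"
            using key unfolding \<mu>_def id2 .
        qed (use q_nonneg c2 E0 sumq in auto)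
        also have "\<dots> = ennreal (c2 * E * S)" using sumq_eq[of "c2 * E"] by simp
        also have "\<dots> \<le> ennreal (C * (t - s) powr (min (2*\<kappa>/\<alpha>) 2))"
        proof (intro ennreal_leI)
          have "c2 * S \<le> C" using K0 S0 by (simp add: C_def)
          then have "c2 * S * E \<le> C * E" using E0 by (rule mult_right_mono)
          then show "c2 * E * S \<le> C * (t - s) powr (min (2*\<kappa>/\<alpha>) 2)"
            by (simp add: E_def P_def \<beta>_def ac_simps)
        qed
        finally show ?thesis .
      qed
      show ?thesis using claim1 claim2 by blast
    qed
  qed
qed

end
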